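(* Let $\widehat g\in\widehat{\mathcal L}$ with leading term $ax^\alpha\boldsymbol\ell^m$, $a>0$, $\alpha>0$, $m\in\mathbb Z$, and let $\widehat g_{\alpha,m}(x)=ax^\alpha\boldsymbol\ell^m$. Then $\widehat\varphi:=\widehat g_{\alpha,m}^{-1}\circ\widehat g$ (so that $\widehat g=\widehat g_{\alpha,m}\circ\widehat\varphi$) is parabolic and belongs to $\widehat{\mathcal L}_2$, and to $\widehat{\mathcal L}$ if $m=0$. Moreover $\mathcal S(\widehat\varphi-\mathrm{id})\subseteq\mathcal R_{\widehat g}$, where $\mathcal R_{\widehat g}=\widetilde{\mathcal R}_{\widehat g}+(1,0,0)$ if $m\neq0$ and $\mathcal R_{\widehat g}=\widetilde{\mathcal R}_{\widehat g}+(1,0)$ if $m=0$.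
   Context: $\boldsymbol\ell(x)=-1/\log x$, $\boldsymbol\ell_2=\boldsymbol\ell\circ\boldsymbol\ell$. $\widehat{\mathcal L}_j$, $\widehat{\mathcal L}$: power–iterated-logarithm transseries $\sum a\,x^{\gamma_0}\boldsymbol\ell^{\gamma_1}\cdots\boldsymbol\ell_j^{\gamma_j}$ with well-ordered nested exponent sequences (each finite or strictly increasing to $+\infty$) and positive $x$-exponents; $\widehat{\mathcal L}\subset\widehat{\mathcal L}_1$ has integer $\boldsymbol\ell$-exponents. Parabolic means leading term $x$. The support $\mathcal S(\cdot)$ is the set of exponent tuples of monomials with nonzero coefficient. $\widetilde{\mathcal R}_{\widehat g}$ is the additive sub-semigroup generated by: if $m\ne0$, $(\beta-\alpha,l-m,0)$ for $(\beta,l)\in\mathcal S(\widehat g)\setminus\{(\alpha,m)\}$, $(0,1,-1)$ and $(0,0,1)$; if $m=0$, $(\beta-\alpha,l)$ for $(\beta,l)\in\mathcal S(\widehat g)\setminus\{(\alpha,0)\}$ and $(0,1)$. *)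

theory Defs
  imports Complex_Main
begin

text \<open>Formal power--iterated-logarithm transseries, represented by their coefficient maps.
  A monomial x^g0 * l^g1 * l2^g2 (l = -1/log x, l2 = l o l, x -> 0+) is encoded by the
  exponent triple (g0, g1, g2).  A monomial with lexicographically larger exponent triple is
  smaller (as x -> 0+), so leading terms are lexicographic minima of the support.\<close>

type_synonym mon = "real \<times> real \<times> real"
type_synonym ts = "mon \<Rightarrow> real"

definition add_mon :: "mon \<Rightarrow> mon \<Rightarrow> mon" where
  "add_mon p q = (fst p + fst q, fst (snd p) + fst (snd q), snd (snd p) + snd (snd q))"

definition add2 :: "real \<times> real \<Rightarrow> real \<times> real \<Rightarrow> real \<times> real" where
  "add2 p q = (fst p + fst q, snd p + snd q)"

definition lexless :: "mon \<Rightarrow> mon \<Rightarrow> bool" where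
  "lexless p q \<longleftrightarrow> fst p < fst q \<or>
     (fst p = fst q \<and> (fst (snd p) < fst (snd q) \<or>
        (fst (snd p) = fst (snd q) \<and> snd (snd p) < snd (snd q))))"

definition lexle :: "mon \<Rightarrow> mon \<Rightarrow> bool" where
  "lexle p q \<longleftrightarrow> p = q \<or> lexless p q"

definition supp :: "ts \<Rightarrow> mon set" where
  "supp f = {p. f p \<noteq> 0}"

definition well_ordered_mon :: "mon set \<Rightarrow> bool" where
  "well_ordered_mon A \<longleftrightarrow> (\<forall>B \<subseteq> A. B \<noteq> {} \<longrightarrow> (\<exists>b\<in>B. \<forall>c\<in>B. lexle b c))"

definition hahn :: "ts \<Rightarrow> bool" where
  "hahn f \<longleftrightarrow> well_ordered_mon (supp f)"

definition ts_mono :: "real \<Rightarrow> mon \<Rightarrow> ts" where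
  "ts_mono c q = (\<lambda>p. if p = q then c else 0)"

definition ts_one :: ts where
  "ts_one = ts_mono 1 (0, 0, 0)"

definition ts_minus :: "ts \<Rightarrow> ts \<Rightarrow> ts" where
  "ts_minus f g = (\<lambda>p. f p - g p)"

definition ts_scale :: "real \<Rightarrow> ts \<Rightarrow> ts" where
  "ts_scale c f = (\<lambda>p. c * f p)"

definition ts_mult :: "ts \<Rightarrow> ts \<Rightarrow> ts" where
  "ts_mult f g = (\<lambda>r. \<Sum>(p, q) \<in> {(p, q). p \<in> supp f \<and> q \<in> supp g \<and> add_mon p q = r}.
                        f p * g q)"

primrec ts_pow :: "ts \<Rightarrow> nat \<Rightarrow> ts" where
  "ts_pow f 0 = ts_one"
| "ts_pow f (Suc n) = ts_mult f (ts_pow f n)"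

text \<open>Substitution of an infinitesimal into a formal power series \<open>\<Sum> c n * X^n\<close>
  (the family of powers of an infinitesimal Hahn series is summable).\<close>
definition ts_psubst :: "(nat \<Rightarrow> real) \<Rightarrow> ts \<Rightarrow> ts" where
  "ts_psubst c e = (\<lambda>r. \<Sum>n \<in> {n. ts_pow e n r \<noteq> 0}. c n * ts_pow e n r)"

definition ts_binom :: "real \<Rightarrow> ts \<Rightarrow> ts" where
  "ts_binom r e = ts_psubst (\<lambda>n. r gchoose n) e"

definition ts_log1p :: "ts \<Rightarrow> ts" where
  "ts_log1p e = ts_psubst (\<lambda>n. if n = 0 then 0 else (-1) ^ (n + 1) / real n) e"

definition parabolic :: "ts \<Rightarrow> bool" where
  "parabolic f \<longleftrightarrow> hahn f \<and> f (1, 0, 0) = 1 \<and> (\<forall>p \<in> supp f. lexle (1, 0, 0) p)"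

definition ts_eps :: "ts \<Rightarrow> ts" where
  "ts_eps f = (\<lambda>p. f (add_mon p (1, 0, 0)) - ts_one p)"

text \<open>Formal composition \<open>g_{\<alpha>,m} \<circ> \<phi>\<close> with \<open>g_{\<alpha>,m}(x) = a x^\<alpha> l^m\<close>:
  for \<open>\<phi> = x (1 + e)\<close>, \<open>\<phi>^\<alpha> = x^\<alpha> (1+e)^\<alpha>\<close> and
  \<open>l(\<phi>) = l / (1 - l log(1+e))\<close>, so
  \<open>g_{\<alpha>,m} \<circ> \<phi> = a x^\<alpha> l^m (1+e)^\<alpha> (1 + u)^(-m)\<close> with \<open>u = - l log(1+e)\<close>.\<close>
definition comp_gam :: "real \<Rightarrow> real \<Rightarrow> int \<Rightarrow> ts \<Rightarrow> ts" where
  "comp_gam a \<alpha> m \<phi> =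
     (let e = ts_eps \<phi>;
          u = ts_scale (-1) (ts_mult (ts_mono 1 (0, 1, 0)) (ts_log1p e))
      in ts_scale a (ts_mult (ts_mono 1 (\<alpha>, real_of_int m, 0))
                       (ts_mult (ts_binom \<alpha> e) (ts_binom (- real_of_int m) u))))"

text \<open>A real exponent set is "finite or a strictly increasing sequence tending to +infinity".\<close>
definition loc_fin :: "real set \<Rightarrow> bool" where
  "loc_fin A \<longleftrightarrow> (\<forall>c. finite {x \<in> A. x \<le> c})"

definition in_L2 :: "ts \<Rightarrow> bool" where
  "in_L2 f \<longleftrightarrow> (\<forall>p \<in> supp f. fst p > 0)
     \<and> loc_fin {g0. \<exists>g1 g2. (g0, g1, g2) \<in> supp f}
     \<and> (\<forall>g0. loc_fin {g1. \<exists>g2. (g0, g1, g2) \<in> supp f})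
     \<and> (\<forall>g0 g1. loc_fin {g2. (g0, g1, g2) \<in> supp f})"

definition in_L1 :: "ts \<Rightarrow> bool" where
  "in_L1 f \<longleftrightarrow> in_L2 f \<and> (\<forall>p \<in> supp f. snd (snd p) = 0)"

definition in_L :: "ts \<Rightarrow> bool" where
  "in_L f \<longleftrightarrow> in_L1 f \<and> (\<forall>p \<in> supp f. fst (snd p) \<in> \<int>)"

inductive_set sgrp :: "('a \<Rightarrow> 'a \<Rightarrow> 'a) \<Rightarrow> 'a set \<Rightarrow> 'a set" for pl G where
  gen: "x \<in> G \<Longrightarrow> x \<in> sgrp pl G"
| add: "x \<in> sgrp pl G \<Longrightarrow> y \<in> sgrp pl G \<Longrightarrow> pl x y \<in> sgrp pl G"

definition gens3 :: "ts \<Rightarrow> real \<Rightarrow> int \<Rightarrow> mon set" where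
  "gens3 g \<alpha> m = {(\<beta> - \<alpha>, l - real_of_int m, 0) | \<beta> l.
                     (\<beta>, l, 0) \<in> supp g \<and> (\<beta>, l) \<noteq> (\<alpha>, real_of_int m)}
                  \<union> {(0, 1, -1), (0, 0, 1)}"

definition gens2 :: "ts \<Rightarrow> real \<Rightarrow> (real \<times> real) set" where
  "gens2 g \<alpha> = {(\<beta> - \<alpha>, l) | \<beta> l. (\<beta>, l, 0) \<in> supp g \<and> (\<beta>, l) \<noteq> (\<alpha>, 0)}
                \<union> {(0, 1)}"

text \<open>\<open>R_g\<close>; in the case m = 0 pairs (r0, r1) are identified with triples (r0, r1, 0).\<close>
definition R_set :: "ts \<Rightarrow> real \<Rightarrow> int \<Rightarrow> mon set" where
  "R_set g \<alpha> m =
     (if m \<noteq> 0 then {add_mon r (1, 0, 0) | r. r \<in> sgrp add_mon (gens3 g \<alpha> m)}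
      else {(r0 + 1, r1, 0) | r0 r1. (r0, r1) \<in> sgrp add2 (gens2 g \<alpha>)})"

end

theory Submission
  imports Defs "HOL-Library.Product_Lexorder" "HOL-Library.Product_Plus"
begin


lemma add_mon_eq: "add_mon p q = p + q"
  by (cases p; cases q) (auto simp: add_mon_def)

lemma lexless_eq: "lexless p q \<longleftrightarrow> p < q"
  by (cases p; cases q) (auto simp: lexless_def)

lemma lexle_eq: "lexle p q \<longleftrightarrow> p \<le> q"
  by (auto simp: lexle_def lexless_eq)

lemma mon_add_less: "(x::mon) < y \<Longrightarrow> x + z < y + z"
  by (cases x; cases y; cases z) auto

lemma mon_add_le: "(x::mon) \<le> y \<Longrightarrow> x + z \<le> y + z"
  by (cases x; cases y; cases z) auto

lemma mon_add_pos: "0 < (x::mon) \<Longrightarrow> 0 \<le> y \<Longrightarrow> 0 < x + y"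
  by (metis add_0 dual_order.strict_trans2 mon_add_le mon_add_less add.commute)




declare split_paired_Ex[simp del] split_paired_All[simp del]

fun nsum :: "'a::comm_monoid_add set \<Rightarrow> nat \<Rightarrow> 'a set" where
  "nsum A 0 = {0}"
| "nsum A (Suc n) = {p + q | p q. p \<in> A \<and> q \<in> nsum A n}"

definition pos :: "ts \<Rightarrow> bool" where "pos e \<longleftrightarrow> (\<forall>p\<in>supp e. 0 < p)"

lemma mon_le_add: "0 \<le> (q::mon) \<Longrightarrow> p \<le> p + q"
  using mon_add_le[of 0 q p] by (simp add: add.commute)

lemma mon_less_add: "0 < (q::mon) \<Longrightarrow> p < p + q"
  using mon_add_less[of 0 q p] by (simp add: add.commute)

lemma mon_nonneg_add: "0 \<le> (x::mon) \<Longrightarrow> 0 \<le> y \<Longrightarrow> 0 \<le> x + y"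
  using mon_le_add[of y x] by simp

lemma nsum_pos: "A \<subseteq> {x::mon. 0 < x} \<Longrightarrow> x \<in> nsum A n \<Longrightarrow> n > 0 \<Longrightarrow> 0 < x"
proof (induction n arbitrary: x)
  case 0 then show ?case by simp
next
  case (Suc n)
  from Suc.prems(2) obtain p q where x: "x = p + q" "p \<in> A" "q \<in> nsum A n"
    by (simp only: nsum.simps mem_Collect_eq) blast
  have "0 \<le> q"
  proof (cases n)
    case 0 with x show ?thesis by simp
  next
    case (Suc k) then have "0 < q" using Suc.IH[OF Suc.prems(1) x(3)] by simp
    then show ?thesis by (rule less_imp_le)
  qed
  moreover have "0 < p" using x(2) Suc.prems(1) by blast
  ultimately show ?case using x(1) mon_add_pos by blast
qed

lemma nsum_nonneg: assumes "A \<subseteq> {x::mon. 0 < x}" "x \<in> nsum A n" shows "0 \<le> x"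
proof (cases n)
  case 0 then show ?thesis using assms by simp
next
  case (Suc k) then show ?thesis using nsum_pos[OF assms] less_imp_le by blast
qed

lemma supp_mult: "supp (ts_mult f g) \<subseteq> {p + q | p q. p \<in> supp f \<and> q \<in> supp g}"
proof
  fix r assume "r \<in> supp (ts_mult f g)"
  let ?S = "{(p,q). p \<in> supp f \<and> q \<in> supp g \<and> add_mon p q = r}"
  have "ts_mult f g r \<noteq> 0" using \<open>r \<in> supp (ts_mult f g)\<close> by (simp add: supp_def)
  moreover have "ts_mult f g r = (\<Sum>(p,q)\<in>?S. f p * g q)" by (simp add: ts_mult_def)
  ultimately have "?S \<noteq> {}" by (metis sum.empty)
  then obtain p q where "(p,q) \<in> ?S" by blast
  then have "p \<in> supp f" "q \<in> supp g" "r = p + q" by (auto simp: add_mon_eq)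
  then show "r \<in> {p + q | p q. p \<in> supp f \<and> q \<in> supp g}" by blast
qed

lemma supp_pow: "supp (ts_pow e n) \<subseteq> nsum (supp e) n"
proof (induction n)
  case 0 then show ?case by (auto simp: supp_def ts_one_def ts_mono_def zero_prod_def)
next
  case (Suc n)
  show ?case
  proof
    fix x assume "x \<in> supp (ts_pow e (Suc n))"
    then obtain p q where "p \<in> supp e" "q \<in> supp (ts_pow e n)" "x = p + q"
      using supp_mult[of e "ts_pow e n"] by auto
    then show "x \<in> nsum (supp e) (Suc n)" using Suc.IH by auto
  qed
qed

lemma supp_psubst: "supp (ts_psubst c e) \<subseteq> (\<Union>n. supp (ts_pow e n))"
proof
  fix r assume "r \<in> supp (ts_psubst c e)"
  then have "ts_psubst c e r \<noteq> 0" by (simp add: supp_def)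
  moreover have "ts_psubst c e r = (\<Sum>n\<in>{n. ts_pow e n r \<noteq> 0}. c n * ts_pow e n r)" by (simp add: ts_psubst_def)
  ultimately have "{n. ts_pow e n r \<noteq> 0} \<noteq> {}" by (metis sum.empty)
  then show "r \<in> (\<Union>n. supp (ts_pow e n))" by (auto simp: supp_def)
qed

lemma ts_one_apply: "ts_one r = (if r = 0 then 1 else 0)"
  by (simp add: ts_one_def ts_mono_def zero_prod_def)

lemma mult_one_right: "ts_mult f ts_one r = f r"
proof -
  have S: "supp ts_one = {0}" by (auto simp: supp_def ts_one_apply)
  have "{(p, q). p \<in> supp f \<and> q \<in> supp ts_one \<and> add_mon p q = r} = {(p,q). p = r \<and> q = 0 \<and> f r \<noteq> 0}"
    unfolding S by (auto simp: add_mon_eq supp_def)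
  also have "\<dots> = (if f r \<noteq> 0 then {(r,0)} else {})" by auto
  finally show ?thesis unfolding ts_mult_def by (auto simp: ts_one_apply)
qed

lemma pow_one: "ts_pow e (Suc 0) r = e r"
  by (simp add: mult_one_right)

lemma mult_mono_left: "ts_mult (ts_mono 1 v) f r = f (r - v)"
proof -
  have "{(p, q). p \<in> supp (ts_mono 1 v) \<and> q \<in> supp f \<and> add_mon p q = r} = (if f (r - v) \<noteq> 0 then {(v, r - v)} else {})"
  proof (rule set_eqI)
    fix x :: "mon \<times> mon"
    obtain p q where x: "x = (p, q)" by (cases x)
    have "p + q = r \<longleftrightarrow> q = r - p" by (metis add.commute eq_diff_eq)
    then show "x \<in> {(p, q). p \<in> supp (ts_mono 1 v) \<and> q \<in> supp f \<and> add_mon p q = r} \<longleftrightarrow> x \<in> (if f (r - v) \<noteq> 0 then {(v, r - v)} else {})"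
      unfolding x by (simp add: supp_def ts_mono_def add_mon_eq) (metis (no_types))
  qed
  then show ?thesis unfolding ts_mult_def by (simp add: ts_mono_def)
qed

lemma mult_agree:
  assumes "\<And>p q. p \<in> supp f1 \<union> supp f2 \<Longrightarrow> q \<in> supp g1 \<union> supp g2 \<Longrightarrow> p + q = r \<Longrightarrow> p \<in> D \<and> q \<in> E"
    and "\<And>s. s \<in> D \<Longrightarrow> f1 s = f2 s" and "\<And>s. s \<in> E \<Longrightarrow> g1 s = g2 s"
  shows "ts_mult f1 g1 r = ts_mult f2 g2 r"
proof -
  have eq: "{(p, q). p \<in> supp f1 \<and> q \<in> supp g1 \<and> add_mon p q = r} =
            {(p, q). p \<in> supp f2 \<and> q \<in> supp g2 \<and> add_mon p q = r}"
  proof -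
    { fix p q assume "p \<in> supp f1 \<union> supp f2" "q \<in> supp g1 \<union> supp g2" "p + q = r"
      then have "p \<in> D" "q \<in> E" using assms(1) by blast+
      then have "(p \<in> supp f1 \<longleftrightarrow> p \<in> supp f2) \<and> (q \<in> supp g1 \<longleftrightarrow> q \<in> supp g2)"
        using assms(2,3) by (auto simp: supp_def) }
    note * = this
    show ?thesis
    proof (rule set_eqI)
      fix x :: "mon \<times> mon"
      obtain p q where x: "x = (p, q)" by (cases x)
      show "x \<in> {(p, q). p \<in> supp f1 \<and> q \<in> supp g1 \<and> add_mon p q = r} \<longleftrightarrow>
            x \<in> {(p, q). p \<in> supp f2 \<and> q \<in> supp g2 \<and> add_mon p q = r}"
        unfolding x using *[of p q] by (simp add: add_mon_eq) blast
    qed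
  qed
  show ?thesis unfolding ts_mult_def eq
  proof (rule sum.cong[OF refl])
    fix x assume "x \<in> {(p, q). p \<in> supp f2 \<and> q \<in> supp g2 \<and> add_mon p q = r}"
    moreover obtain p q where x: "x = (p, q)" by (cases x)
    ultimately have "p \<in> supp f2" "q \<in> supp g2" "p + q = r" by (simp_all add: add_mon_eq)
    then have "p \<in> D" "q \<in> E" using assms(1) by blast+
    then show "(case x of (p, q) \<Rightarrow> f1 p * g1 q) = (case x of (p, q) \<Rightarrow> f2 p * g2 q)"
      unfolding x using assms(2,3) by simp
  qed
qed

lemma pos_supp_pow: assumes "pos e" "p \<in> supp (ts_pow e n)" shows "0 \<le> p"
proof -
  have "p \<in> nsum (supp e) n" using supp_pow assms(2) by blast
  moreover have "supp e \<subseteq> {x. 0 < x}" using assms(1) by (auto simp: pos_def)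
  ultimately show ?thesis using nsum_nonneg by blast
qed

lemma pos_supp_pow_pos: assumes "pos e" "p \<in> supp (ts_pow e n)" "n > 0" shows "0 < p"
proof -
  have "p \<in> nsum (supp e) n" using supp_pow assms(2) by blast
  moreover have "supp e \<subseteq> {x. 0 < x}" using assms(1) by (auto simp: pos_def)
  ultimately show ?thesis using nsum_pos assms(3) by blast
qed

lemma pos_supp_psubst: "pos e \<Longrightarrow> p \<in> supp (ts_psubst c e) \<Longrightarrow> 0 \<le> p"
  using supp_psubst[of c e] pos_supp_pow by blast

lemma sum_le_r: "0 \<le> (q::mon) \<Longrightarrow> p + q = r \<Longrightarrow> p \<le> r"
  using mon_le_add by blast

lemma sum_le_r2: "0 \<le> (p::mon) \<Longrightarrow> p + q = r \<Longrightarrow> q \<le> r"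
  using mon_le_add[of p q] by (simp add: add.commute)

lemma sum_less_r: "0 < (q::mon) \<Longrightarrow> p + q = r \<Longrightarrow> p < r"
  using mon_less_add by blast

lemma sum_less_r2: "0 < (p::mon) \<Longrightarrow> p + q = r \<Longrightarrow> q < r"
  using mon_less_add[of p q] by (simp add: add.commute)

lemma pow_agree_le:
  assumes "pos e1" "pos e2" "\<And>s. s \<le> r \<Longrightarrow> e1 s = e2 s"
  shows "s \<le> r \<Longrightarrow> ts_pow e1 n s = ts_pow e2 n s"
proof (induction n arbitrary: s)
  case 0 then show ?case by simp
next
  case (Suc n)
  show ?case unfolding ts_pow.simps
  proof (rule mult_agree[where D="{s. s \<le> r}" and E="{s. s \<le> r}"])
    fix p q assume "p \<in> supp e1 \<union> supp e2" "q \<in> supp (ts_pow e1 n) \<union> supp (ts_pow e2 n)" "p + q = s"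
    then have "0 \<le> p" "0 \<le> q" using assms(1,2) pos_supp_pow unfolding pos_def by (blast intro: less_imp_le)+
    then show "p \<in> {s. s \<le> r} \<and> q \<in> {s. s \<le> r}"
      using \<open>p + q = s\<close> Suc.prems sum_le_r sum_le_r2 by (meson mem_Collect_eq order_trans)
  next
    fix t :: mon assume "t \<in> {s. s \<le> r}" then show "e1 t = e2 t" using assms(3) by simp
  next
    fix t :: mon assume "t \<in> {s. s \<le> r}" then show "ts_pow e1 n t = ts_pow e2 n t" using Suc.IH by simp
  qed
qed

lemma pow_agree_less:
  assumes "pos e1" "pos e2" "\<And>s. s < r \<Longrightarrow> e1 s = e2 s"
  shows "s < r \<Longrightarrow> ts_pow e1 n s = ts_pow e2 n s"
proof -
  assume "s < r"
  then have "\<And>t. t \<le> s \<Longrightarrow> e1 t = e2 t" using assms(3) by (meson le_less_trans)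
  then show ?thesis using pow_agree_le[OF assms(1,2), where r=s and s=s] by blast
qed

lemma pow_agree_at:
  assumes "pos e1" "pos e2" "\<And>s. s < r \<Longrightarrow> e1 s = e2 s" "n \<noteq> 1"
  shows "ts_pow e1 n r = ts_pow e2 n r"
proof (cases n)
  case 0 then show ?thesis by simp
next
  case (Suc k)
  with assms have "k > 0" by auto
  show ?thesis unfolding Suc ts_pow.simps
  proof (rule mult_agree[where D="{s. s < r}" and E="{s. s < r}"])
    fix p q assume "p \<in> supp e1 \<union> supp e2" "q \<in> supp (ts_pow e1 k) \<union> supp (ts_pow e2 k)" "p + q = r"
    then have "0 < p" "0 < q" using assms(1,2) pos_supp_pow_pos \<open>k > 0\<close> unfolding pos_def by blast+
    then show "p \<in> {s. s < r} \<and> q \<in> {s. s < r}"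
      using \<open>p + q = r\<close> sum_less_r sum_less_r2 by blast
  next
    fix t :: mon assume "t \<in> {s. s < r}" then show "e1 t = e2 t" using assms(3) by simp
  next
    fix t :: mon assume "t \<in> {s. s < r}" then show "ts_pow e1 k t = ts_pow e2 k t"
      using pow_agree_less[OF assms(1-3)] by simp
  qed
qed

lemma pow_at0: "pos e \<Longrightarrow> ts_pow e n 0 = (if n = 0 then 1 else 0)"
proof -
  assume "pos e"
  show ?thesis
  proof (cases n)
    case 0 then show ?thesis by (simp add: ts_one_apply)
  next
    case (Suc k)
    have "0 \<notin> supp (ts_pow e n)" using pos_supp_pow_pos[OF \<open>pos e\<close>, of 0 n] Suc by blast
    then show ?thesis using Suc by (simp add: supp_def)
  qed
qed

lemma psubst_at0: "pos e \<Longrightarrow> ts_psubst c e 0 = c 0"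
proof -
  assume "pos e"
  then have "{n. ts_pow e n 0 \<noteq> 0} = {0}" by (simp add: pow_at0 set_eq_iff)
  then show ?thesis using pow_at0[OF \<open>pos e\<close>] by (simp add: ts_psubst_def ts_one_apply)
qed




definition Bf :: "real \<Rightarrow> ts \<Rightarrow> ts" where "Bf \<alpha> e = ts_binom \<alpha> e"
definition uf :: "ts \<Rightarrow> ts" where
  "uf e = ts_scale (-1) (ts_mult (ts_mono 1 (0, 1, 0)) (ts_log1p e))"
definition Uf :: "int \<Rightarrow> ts \<Rightarrow> ts" where "Uf m e = ts_binom (- real_of_int m) (uf e)"
definition Cf :: "real \<Rightarrow> int \<Rightarrow> ts \<Rightarrow> ts" where "Cf \<alpha> m e = ts_mult (Bf \<alpha> e) (Uf m e)"

lemma comp_gam_Cf: "comp_gam a \<alpha> m \<phi> = ts_scale a (ts_mult (ts_mono 1 (\<alpha>, real_of_int m, 0)) (Cf \<alpha> m (ts_eps \<phi>)))"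
  by (simp add: comp_gam_def Cf_def Bf_def Uf_def uf_def Let_def)

lemma uf_apply: "uf e s = - ts_log1p e (s - (0,1,0))"
  by (simp add: uf_def ts_scale_def mult_mono_left)

lemma d010_pos: "(0::mon) < (0,1,0)"
  by (simp add: zero_prod_def)

lemma pos_uf: assumes "pos e" shows "pos (uf e)"
  unfolding pos_def
proof
  fix s assume "s \<in> supp (uf e)"
  then have "s - (0,1,0) \<in> supp (ts_log1p e)" by (simp add: supp_def uf_apply)
  then have "0 \<le> s - (0,1,0)" using pos_supp_psubst[OF assms] unfolding ts_log1p_def by blast
  then have "(0,1,0) \<le> s - (0,1,0) + (0,1,0)" using mon_le_add[of "s - (0,1,0)" "(0,1,0)"]
    by (simp add: add.commute)
  then show "0 < s" using d010_pos by simp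
qed

lemma Bf_agree:
  assumes "pos e1" "pos e2" "\<And>s. s < r \<Longrightarrow> e1 s = e2 s" "s < r"
  shows "Bf \<alpha> e1 s = Bf \<alpha> e2 s"
  using pow_agree_less[OF assms(1-3) assms(4)] by (simp add: Bf_def ts_binom_def ts_psubst_def)

lemma log_agree:
  assumes "pos e1" "pos e2" "\<And>s. s < r \<Longrightarrow> e1 s = e2 s" "s < r"
  shows "ts_log1p e1 s = ts_log1p e2 s"
  using pow_agree_less[OF assms(1-3) assms(4)] by (simp add: ts_log1p_def ts_psubst_def)

lemma uf_agree:
  assumes "pos e1" "pos e2" "\<And>s. s < r \<Longrightarrow> e1 s = e2 s" "s \<le> r"
  shows "uf e1 s = uf e2 s"
proof -
  have "s - (0,1,0) < s - (0,1,0) + (0,1,0)" using mon_less_add[OF d010_pos] by blast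
  then have "s - (0,1,0) < r" using assms(4) by simp
  then show ?thesis using log_agree[OF assms(1-3)] by (simp add: uf_apply)
qed

lemma Uf_agree:
  assumes "pos e1" "pos e2" "\<And>s. s < r \<Longrightarrow> e1 s = e2 s" "s \<le> r"
  shows "Uf m e1 s = Uf m e2 s"
proof -
  have "\<And>t. t \<le> r \<Longrightarrow> uf e1 t = uf e2 t" using uf_agree[OF assms(1-3)] by blast
  then have "\<And>n. ts_pow (uf e1) n s = ts_pow (uf e2) n s"
    using pow_agree_le[OF pos_uf[OF assms(1)] pos_uf[OF assms(2)]] assms(4) by blast
  then show ?thesis by (simp add: Uf_def ts_binom_def ts_psubst_def)
qed

lemma Uf_at0: "pos e \<Longrightarrow> Uf m e 0 = 1"
  by (simp add: Uf_def ts_binom_def psubst_at0 pos_uf)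

lemma Bf_nonneg: "pos e \<Longrightarrow> p \<in> supp (Bf \<alpha> e) \<Longrightarrow> 0 \<le> p"
  unfolding Bf_def ts_binom_def using pos_supp_psubst by blast

lemma Uf_nonneg: "pos e \<Longrightarrow> p \<in> supp (Uf m e) \<Longrightarrow> 0 \<le> p"
  unfolding Uf_def ts_binom_def using pos_supp_psubst pos_uf by blast

lemma pos_restr: "pos e \<Longrightarrow> pos (\<lambda>s. if s < r then e s else 0)"
  by (simp add: pos_def supp_def)

lemma Bf_decomp:
  fixes e :: ts and r :: mon
  assumes pe: "pos e"
  defines "e' \<equiv> (\<lambda>s. if s < r then e s else 0)"
  assumes fin1: "finite {n. ts_pow e' n r \<noteq> 0}"
  shows "Bf \<alpha> e r = Bf \<alpha> e' r + \<alpha> * e r"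
proof -
  have pe': "pos e'" unfolding e'_def by (rule pos_restr[OF pe])
  have ag: "\<And>s. s < r \<Longrightarrow> e s = e' s" by (simp add: e'_def)
  have A2: "\<And>n. n \<noteq> 1 \<Longrightarrow> ts_pow e n r = ts_pow e' n r"
    using pow_agree_at[OF pe pe' ag] by blast
  have A3: "ts_pow e 1 r = e r" "ts_pow e' 1 r = 0"
    using pow_one[of e r] pow_one[of e' r] by (simp_all add: e'_def)
  define X where "X = {n. ts_pow e' n r \<noteq> 0} \<union> {1}"
  have finX: "finite X" using fin1 by (simp add: X_def)
  define c where "c = (\<lambda>n. \<alpha> gchoose n)"
  have s1: "Bf \<alpha> e r = (\<Sum>n\<in>X. c n * ts_pow e n r)"
    unfolding Bf_def ts_binom_def ts_psubst_def c_def
    by (rule sum.mono_neutral_left[OF finX]) (auto simp: X_def A2 A3 simp del: One_nat_def)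
  have s2: "Bf \<alpha> e' r = (\<Sum>n\<in>X. c n * ts_pow e' n r)"
    unfolding Bf_def ts_binom_def ts_psubst_def c_def
    by (rule sum.mono_neutral_left[OF finX]) (auto simp: X_def)
  have "Bf \<alpha> e r - Bf \<alpha> e' r = (\<Sum>n\<in>X. c n * (ts_pow e n r - ts_pow e' n r))"
    unfolding s1 s2 by (simp add: sum_subtractf right_diff_distrib)
  also have "\<dots> = (\<Sum>n\<in>{1}. c n * (ts_pow e n r - ts_pow e' n r))"
    by (rule sum.mono_neutral_right[OF finX]) (auto simp: X_def A2)
  also have "\<dots> = \<alpha> * e r" using A3 by (simp add: c_def)
  finally show ?thesis by simp
qed

lemma Cf_decomp:
  fixes e :: ts and r :: mon
  assumes pe: "pos e"
  defines "e' \<equiv> (\<lambda>s. if s < r then e s else 0)"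
  assumes fin1: "finite {n. ts_pow e' n r \<noteq> 0}"
    and fin2: "finite {(p,q). p \<in> supp (Bf \<alpha> e') \<and> q \<in> supp (Uf m e') \<and> p + q = r}"
    and r0: "0 \<le> r"
  shows "Cf \<alpha> m e r = Cf \<alpha> m e' r + \<alpha> * e r"
proof -
  have pe': "pos e'" unfolding e'_def by (rule pos_restr[OF pe])
  have ag: "\<And>s. s < r \<Longrightarrow> e s = e' s" by (simp add: e'_def)
  have Bag: "\<And>s. s < r \<Longrightarrow> Bf \<alpha> e s = Bf \<alpha> e' s" using Bf_agree[OF pe pe' ag] by blast
  have Uag: "\<And>s. s \<le> r \<Longrightarrow> Uf m e s = Uf m e' s" using Uf_agree[OF pe pe' ag] by blast
  have Bd: "Bf \<alpha> e r = Bf \<alpha> e' r + \<alpha> * e r" using Bf_decomp[OF pe fin1[unfolded e'_def]] by (simp add: e'_def)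
  have U0: "Uf m e 0 = 1" "Uf m e' 0 = 1" using Uf_at0 pe pe' by blast+
  define P where "P = {(p,q). p \<in> supp (Bf \<alpha> e) \<and> q \<in> supp (Uf m e) \<and> add_mon p q = r}"
  define P' where "P' = {(p,q). p \<in> supp (Bf \<alpha> e') \<and> q \<in> supp (Uf m e') \<and> add_mon p q = r}"
  define X where "X = P' \<union> {(r,0)}"
  have finP': "finite P'" using fin2 by (simp add: P'_def add_mon_eq)
  then have finX: "finite X" by (simp add: X_def)
  have Xsum: "\<And>p q. (p,q) \<in> X \<Longrightarrow> p + q = r \<and> 0 \<le> q \<and> 0 \<le> p"
  proof -
    fix p q assume "(p,q) \<in> X"
    then consider "(p,q) \<in> P'" | "p = r" "q = 0" by (auto simp: X_def)
    then show "p + q = r \<and> 0 \<le> q \<and> 0 \<le> p"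
    proof cases
      case 1 then have "p \<in> supp (Bf \<alpha> e')" "q \<in> supp (Uf m e')" "p + q = r" by (simp_all add: P'_def add_mon_eq)
      then show ?thesis using Uf_nonneg[OF pe'] Bf_nonneg[OF pe'] by blast
    next
      case 2 then show ?thesis using r0 by simp
    qed
  qed
  have PX: "P \<subseteq> X"
  proof
    fix x assume "x \<in> P"
    obtain p q where x: "x = (p,q)" by (cases x)
    with \<open>x \<in> P\<close> have h: "p \<in> supp (Bf \<alpha> e)" "q \<in> supp (Uf m e)" "p + q = r"
      by (simp_all add: P_def add_mon_eq)
    have q0: "0 \<le> q" using Uf_nonneg[OF pe h(2)] .
    have p0: "0 \<le> p" using Bf_nonneg[OF pe h(1)] .
    have "q \<le> r" using sum_le_r2[OF p0 h(3)] .
    then have q': "q \<in> supp (Uf m e')" using h(2) Uag by (simp add: supp_def)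
    have "p \<le> r" using sum_le_r[OF q0 h(3)] .
    then consider "p < r" | "p = r" by fastforce
    then show "x \<in> X"
    proof cases
      case 1 then have "p \<in> supp (Bf \<alpha> e')" using h(1) Bag by (simp add: supp_def)
      then show ?thesis using q' h(3) by (simp add: x X_def P'_def add_mon_eq)
    next
      case 2 then have "q = 0" using h(3) by simp
      then show ?thesis using 2 by (simp add: x X_def)
    qed
  qed
  have s1: "Cf \<alpha> m e r = (\<Sum>(p,q)\<in>X. Bf \<alpha> e p * Uf m e q)"
    unfolding Cf_def ts_mult_def P_def[symmetric]
  proof (rule sum.mono_neutral_left[OF finX PX])
    show "\<forall>i\<in>X - P. (case i of (p, q) \<Rightarrow> Bf \<alpha> e p * Uf m e q) = 0"
    proof
      fix i assume "i \<in> X - P"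
      obtain p q where i: "i = (p,q)" by (cases i)
      with \<open>i \<in> X - P\<close> Xsum[of p q] have "p + q = r" "(p,q) \<notin> P" by auto
      then have "p \<notin> supp (Bf \<alpha> e) \<or> q \<notin> supp (Uf m e)" by (simp add: P_def add_mon_eq)
      then show "(case i of (p, q) \<Rightarrow> Bf \<alpha> e p * Uf m e q) = 0" by (auto simp: i supp_def)
    qed
  qed
  have s2: "Cf \<alpha> m e' r = (\<Sum>(p,q)\<in>X. Bf \<alpha> e' p * Uf m e' q)"
    unfolding Cf_def ts_mult_def P'_def[symmetric]
  proof (rule sum.mono_neutral_left[OF finX])
    show "P' \<subseteq> X" unfolding X_def by (rule Un_upper1)
    show "\<forall>i\<in>X - P'. (case i of (p, q) \<Rightarrow> Bf \<alpha> e' p * Uf m e' q) = 0"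
    proof
      fix i assume "i \<in> X - P'"
      obtain p q where i: "i = (p,q)" by (cases i)
      with \<open>i \<in> X - P'\<close> Xsum[of p q] have "p + q = r" "(p,q) \<notin> P'" by auto
      then have "p \<notin> supp (Bf \<alpha> e') \<or> q \<notin> supp (Uf m e')" by (simp add: P'_def add_mon_eq)
      then show "(case i of (p, q) \<Rightarrow> Bf \<alpha> e' p * Uf m e' q) = 0" by (auto simp: i supp_def)
    qed
  qed
  have "Cf \<alpha> m e r - Cf \<alpha> m e' r = (\<Sum>x\<in>X. (case x of (p,q) \<Rightarrow> Bf \<alpha> e p * Uf m e q - Bf \<alpha> e' p * Uf m e' q))"
    unfolding s1 s2 by (simp add: sum_subtractf[symmetric] case_prod_beta)
  also have "\<dots> = (\<Sum>x\<in>{(r,0)}. (case x of (p,q) \<Rightarrow> Bf \<alpha> e p * Uf m e q - Bf \<alpha> e' p * Uf m e' q))"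
  proof (rule sum.mono_neutral_right[OF finX])
    show "{(r, 0)} \<subseteq> X" by (simp add: X_def)
    show "\<forall>i\<in>X - {(r, 0)}. (case i of (p,q) \<Rightarrow> Bf \<alpha> e p * Uf m e q - Bf \<alpha> e' p * Uf m e' q) = 0"
    proof
      fix i assume "i \<in> X - {(r, 0)}"
      obtain p q where i: "i = (p,q)" by (cases i)
      with \<open>i \<in> X - {(r, 0)}\<close> have iX: "(p,q) \<in> X" "(p,q) \<noteq> (r,0)" by auto
      from Xsum[OF iX(1)] have h: "p + q = r" "0 \<le> q" "0 \<le> p" by auto
      have "p \<noteq> r" using iX(2) h(1) by auto
      moreover have "p \<le> r" using sum_le_r[OF h(2) h(1)] .
      ultimately have "p < r" by simp
      moreover have "q \<le> r" using sum_le_r2[OF h(3) h(1)] .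
      ultimately show "(case i of (p,q) \<Rightarrow> Bf \<alpha> e p * Uf m e q - Bf \<alpha> e' p * Uf m e' q) = 0"
        using Bag Uag by (simp add: i)
    qed
  qed
  also have "\<dots> = \<alpha> * e r" using Bd U0 by simp
  finally show ?thesis by simp
qed




definition closedM :: "mon set \<Rightarrow> bool" where
  "closedM M \<longleftrightarrow> (\<forall>x\<in>M. 0 < x) \<and> (\<forall>x\<in>M. \<forall>y\<in>M. x + y \<in> M) \<and> (0,1,0) \<in> M"

lemma closedM_add0: "closedM M \<Longrightarrow> x \<in> insert 0 M \<Longrightarrow> y \<in> insert 0 M \<Longrightarrow> x + y \<in> insert 0 M"
  unfolding closedM_def by auto

lemma nsum_sub: "closedM M \<Longrightarrow> A \<subseteq> M \<Longrightarrow> nsum A n \<subseteq> insert 0 M"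
proof (induction n)
  case 0 then show ?case by simp
next
  case (Suc n)
  show ?case
  proof
    fix x assume "x \<in> nsum A (Suc n)"
    then obtain p q where x: "x = p + q" "p \<in> A" "q \<in> nsum A n"
      by (simp only: nsum.simps mem_Collect_eq) blast
    then have "p \<in> insert 0 M" "q \<in> insert 0 M" using Suc by blast+
    then show "x \<in> insert 0 M" using closedM_add0[OF Suc.prems(1)] x(1) by blast
  qed
qed

lemma pow_supp_M: "closedM M \<Longrightarrow> supp e \<subseteq> M \<Longrightarrow> supp (ts_pow e n) \<subseteq> insert 0 M"
  using supp_pow nsum_sub by blast

lemma psubst_supp_M: "closedM M \<Longrightarrow> supp e \<subseteq> M \<Longrightarrow> supp (ts_psubst c e) \<subseteq> insert 0 M"
  using supp_psubst pow_supp_M by blast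

lemma pos_of_M: "closedM M \<Longrightarrow> supp e \<subseteq> M \<Longrightarrow> pos e"
  unfolding closedM_def pos_def by blast

lemma uf_supp_M: assumes "closedM M" "supp e \<subseteq> M" shows "supp (uf e) \<subseteq> M"
proof
  fix s assume "s \<in> supp (uf e)"
  then have "s - (0,1,0) \<in> supp (ts_log1p e)" by (simp add: supp_def uf_apply)
  then have "s - (0,1,0) \<in> insert 0 M" using psubst_supp_M[OF assms] unfolding ts_log1p_def by blast
  moreover have "(0,1,0) \<in> M" using assms(1) by (simp add: closedM_def)
  ultimately have "s - (0,1,0) + (0,1,0) \<in> M" using assms(1) unfolding closedM_def
    by (metis add_0 insert_iff)
  then show "s \<in> M" by simp
qed

lemma Bf_supp_M: "closedM M \<Longrightarrow> supp e \<subseteq> M \<Longrightarrow> supp (Bf \<alpha> e) \<subseteq> insert 0 M"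
  unfolding Bf_def ts_binom_def using psubst_supp_M by blast

lemma Uf_supp_M: "closedM M \<Longrightarrow> supp e \<subseteq> M \<Longrightarrow> supp (Uf m e) \<subseteq> insert 0 M"
  unfolding Uf_def ts_binom_def using psubst_supp_M uf_supp_M by blast

lemma Cf_supp_M: assumes "closedM M" "supp e \<subseteq> M" shows "supp (Cf \<alpha> m e) \<subseteq> insert 0 M"
proof
  fix x assume "x \<in> supp (Cf \<alpha> m e)"
  then obtain p q where "p \<in> supp (Bf \<alpha> e)" "q \<in> supp (Uf m e)" "x = p + q"
    using supp_mult unfolding Cf_def by blast
  then show "x \<in> insert 0 M" using Bf_supp_M[OF assms] Uf_supp_M[OF assms] closedM_add0[OF assms(1)] by blast
qed

lemma fin1_M:
  assumes "closedM M" "supp e \<subseteq> M" "finite {n. r \<in> nsum M n}"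
  shows "finite {n. ts_pow e n r \<noteq> 0}"
proof (rule finite_subset[OF _ assms(3)])
  show "{n. ts_pow e n r \<noteq> 0} \<subseteq> {n. r \<in> nsum M n}"
  proof
    fix n assume "n \<in> {n. ts_pow e n r \<noteq> 0}"
    then have "r \<in> nsum (supp e) n" using supp_pow[of e n] by (auto simp: supp_def)
    moreover have "nsum (supp e) n \<subseteq> nsum M n"
      using assms(2) by (induction n) (simp_all, blast)
    ultimately show "n \<in> {n. r \<in> nsum M n}" by blast
  qed
qed

lemma fin2_M:
  assumes "closedM M" "supp e \<subseteq> M" "finite {(p,q). p \<in> insert 0 M \<and> q \<in> insert 0 M \<and> p + q = r}"
  shows "finite {(p,q). p \<in> supp (Bf \<alpha> e) \<and> q \<in> supp (Uf m e) \<and> p + q = r}"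
proof (rule finite_subset[OF _ assms(3)])
  show "{(p,q). p \<in> supp (Bf \<alpha> e) \<and> q \<in> supp (Uf m e) \<and> p + q = r} \<subseteq> {(p,q). p \<in> insert 0 M \<and> q \<in> insert 0 M \<and> p + q = r}"
    using Bf_supp_M[OF assms(1,2)] Uf_supp_M[OF assms(1,2)] by blast
qed




definition wo :: "mon set \<Rightarrow> bool" where
  "wo A \<longleftrightarrow> (\<forall>B\<subseteq>A. B \<noteq> {} \<longrightarrow> (\<exists>b\<in>B. \<forall>c\<in>B. b \<le> c))"

lemma wo_eq: "well_ordered_mon A = wo A"
  by (simp add: well_ordered_mon_def wo_def lexle_eq)

lemma wo_subset: "wo A \<Longrightarrow> B \<subseteq> A \<Longrightarrow> wo B"
  unfolding wo_def by blast

definition goodM :: "mon set \<Rightarrow> bool" where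
  "goodM M \<longleftrightarrow> closedM M \<and> (\<forall>r. finite {n. r \<in> nsum M n})
     \<and> (\<forall>r. finite {(p,q). p \<in> insert 0 M \<and> q \<in> insert 0 M \<and> p + q = r}) \<and> wo M"

lemma Cf_at0: assumes "pos e" shows "Cf \<alpha> m e 0 = 1"
proof -
  have B0: "Bf \<alpha> e 0 = 1" using psubst_at0[OF assms] by (simp add: Bf_def ts_binom_def)
  have U0: "Uf m e 0 = 1" using Uf_at0[OF assms] .
  have "{(p,q). p \<in> supp (Bf \<alpha> e) \<and> q \<in> supp (Uf m e) \<and> add_mon p q = 0} = {(0,0)}"
  proof (rule set_eqI)
    fix x :: "mon \<times> mon"
    obtain p q where x: "x = (p,q)" by (cases x)
    have "p \<in> supp (Bf \<alpha> e) \<and> q \<in> supp (Uf m e) \<and> p + q = 0 \<longleftrightarrow> p = 0 \<and> q = 0"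
    proof
      assume h: "p \<in> supp (Bf \<alpha> e) \<and> q \<in> supp (Uf m e) \<and> p + q = 0"
      then have "0 \<le> p" "0 \<le> q" using Bf_nonneg[OF assms] Uf_nonneg[OF assms] by blast+
      then have "p \<le> 0" using sum_le_r h by blast
      then have "p = 0" using \<open>0 \<le> p\<close> by simp
      then show "p = 0 \<and> q = 0" using h by simp
    next
      assume "p = 0 \<and> q = 0" then show "p \<in> supp (Bf \<alpha> e) \<and> q \<in> supp (Uf m e) \<and> p + q = 0"
        using B0 U0 by (simp add: supp_def)
    qed
    then show "x \<in> {(p,q). p \<in> supp (Bf \<alpha> e) \<and> q \<in> supp (Uf m e) \<and> add_mon p q = 0} \<longleftrightarrow> x \<in> {(0,0)}"
      by (simp add: x add_mon_eq)
  qed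
  then show ?thesis using B0 U0 by (simp add: Cf_def ts_mult_def)
qed

lemma solution_supp:
  assumes gM: "goodM M" and hM: "supp h \<subseteq> insert 0 M" and pe: "pos e" and woe: "wo (supp e)"
    and eq: "\<And>s. Cf \<alpha> m e s = h s" and a0: "\<alpha> \<noteq> 0"
  shows "supp e \<subseteq> M"
proof (rule ccontr)
  assume "\<not> supp e \<subseteq> M"
  then have "supp e - M \<noteq> {}" by blast
  then obtain r where r: "r \<in> supp e - M" and rmin: "\<And>c. c \<in> supp e - M \<Longrightarrow> r \<le> c"
    using woe unfolding wo_def by (meson Diff_subset)
  have cM: "closedM M" using gM by (simp add: goodM_def)
  have rpos: "0 < r" using pe r by (simp add: pos_def)
  define e' where "e' = (\<lambda>s. if s < r then e s else 0)"
  have se': "supp e' \<subseteq> M"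
  proof
    fix s assume "s \<in> supp e'"
    then have "s < r" "s \<in> supp e" by (simp_all add: e'_def supp_def split: if_splits)
    then show "s \<in> M" using rmin by (meson DiffI leD)
  qed
  have f1: "finite {n. ts_pow e' n r \<noteq> 0}"
    using fin1_M[OF cM se'] gM by (simp add: goodM_def)
  have f2: "finite {(p,q). p \<in> supp (Bf \<alpha> e') \<and> q \<in> supp (Uf m e') \<and> p + q = r}"
    using fin2_M[OF cM se'] gM by (simp add: goodM_def)
  have d: "Cf \<alpha> m e r = Cf \<alpha> m e' r + \<alpha> * e r"
    using Cf_decomp[OF pe f1[unfolded e'_def] f2[unfolded e'_def]] rpos by (simp add: e'_def)
  have rM0: "r \<notin> insert 0 M" using r rpos by auto
  have "Cf \<alpha> m e r = 0" using eq hM rM0 by (auto simp: supp_def)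
  moreover have "Cf \<alpha> m e' r = 0" using Cf_supp_M[OF cM se'] rM0 by (auto simp: supp_def)
  ultimately have "\<alpha> * e r = 0" using d by simp
  then show False using a0 r by (simp add: supp_def)
qed

lemma solution_exists:
  assumes gM: "goodM M" and hM: "supp h \<subseteq> insert 0 M" and h0: "h 0 = 1" and a0: "\<alpha> \<noteq> 0"
  shows "\<exists>e. supp e \<subseteq> M \<and> (\<forall>s. Cf \<alpha> m e s = h s)"
proof -
  have cM: "closedM M" using gM by (simp add: goodM_def)
  have woM: "wo M" using gM by (simp add: goodM_def)
  define R where "R = {(s, r). s \<in> M \<and> s < r}"
  have wfR: "wf R"
    unfolding wf_eq_minimal
  proof (intro allI impI)
    fix Q :: "mon set" and x assume "x \<in> Q"
    show "\<exists>z\<in>Q. \<forall>y. (y, z) \<in> R \<longrightarrow> y \<notin> Q"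
    proof (cases "Q \<inter> M = {}")
      case True then show ?thesis using \<open>x \<in> Q\<close> by (auto simp: R_def)
    next
      case False
      then obtain z where z: "z \<in> Q \<inter> M" "\<And>c. c \<in> Q \<inter> M \<Longrightarrow> z \<le> c"
        using woM unfolding wo_def by (meson inf_le2)
      show ?thesis
      proof (intro bexI allI impI)
        fix y assume "(y, z) \<in> R"
        then have "y \<in> M" "y < z" by (simp_all add: R_def)
        then show "y \<notin> Q" using z(2) by (meson IntI leD)
      qed (use z in blast)
    qed
  qed
  define F where "F = (\<lambda>(f::ts) (r::mon). if r \<in> M then
      (h r - Cf \<alpha> m (\<lambda>s. if s < r \<and> s \<in> M then f s else 0) r) / \<alpha> else 0)"
  define E where "E = wfrec R F"
  have Eeq: "E r = F E r" for r
  proof -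
    have "E r = F (cut E R r) r" unfolding E_def by (rule wfrec[OF wfR])
    also have "(\<lambda>s. if s < r \<and> s \<in> M then cut E R r s else 0) = (\<lambda>s. if s < r \<and> s \<in> M then E s else 0)"
      by (auto simp: cut_def R_def)
    then have "F (cut E R r) r = F E r" by (simp add: F_def)
    finally show ?thesis .
  qed
  have sE: "supp E \<subseteq> M"
  proof
    fix r assume "r \<in> supp E" then show "r \<in> M" using Eeq[of r] by (auto simp: supp_def F_def split: if_splits)
  qed
  have pE: "pos E" using pos_of_M[OF cM sE] .
  have restr: "(\<lambda>s. if s < r then E s else 0) = (\<lambda>s. if s < r \<and> s \<in> M then E s else 0)" for r
    using sE by (auto simp: supp_def fun_eq_iff)
  have "Cf \<alpha> m E r = h r" for r
  proof (cases "r \<in> M")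
    case True
    define e' where "e' = (\<lambda>s. if s < r then E s else 0)"
    have se': "supp e' \<subseteq> M" using sE by (auto simp: e'_def supp_def)
    have f1: "finite {n. ts_pow e' n r \<noteq> 0}"
      using fin1_M[OF cM se'] gM by (simp add: goodM_def)
    have f2: "finite {(p,q). p \<in> supp (Bf \<alpha> e') \<and> q \<in> supp (Uf m e') \<and> p + q = r}"
      using fin2_M[OF cM se'] gM by (simp add: goodM_def)
    have r0: "0 \<le> r" using cM True by (simp add: closedM_def less_imp_le)
    have d: "Cf \<alpha> m E r = Cf \<alpha> m e' r + \<alpha> * E r"
      using Cf_decomp[OF pE f1[unfolded e'_def] f2[unfolded e'_def] r0] by (simp add: e'_def)
    have "E r = (h r - Cf \<alpha> m e' r) / \<alpha>"
      using Eeq[of r] True by (simp add: F_def e'_def restr)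
    then show ?thesis using d a0 by simp
  next
    case False
    show ?thesis
    proof (cases "r = 0")
      case True then show ?thesis using Cf_at0[OF pE] h0 by simp
    next
      case False
      then have "r \<notin> insert 0 M" using \<open>r \<notin> M\<close> by simp
      then have "r \<notin> supp (Cf \<alpha> m E)" "r \<notin> supp h" using Cf_supp_M[OF cM sE] hM by blast+
      then show ?thesis by (simp add: supp_def)
    qed
  qed
  then show ?thesis using sE by blast
qed




lemma lf_subset: "loc_fin B \<Longrightarrow> A \<subseteq> B \<Longrightarrow> loc_fin A"
  unfolding loc_fin_def
proof
  fix c assume "\<forall>c. finite {x \<in> B. x \<le> c}" "A \<subseteq> B"
  moreover have "{x \<in> A. x \<le> c} \<subseteq> {x \<in> B. x \<le> c}" using \<open>A \<subseteq> B\<close> by blast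
  ultimately show "finite {x \<in> A. x \<le> c}" using finite_subset by blast
qed

lemma lf_min: assumes "loc_fin A" "A \<noteq> {}" shows "\<exists>a\<in>A. \<forall>x\<in>A. a \<le> x"
proof -
  obtain y where y: "y \<in> A" using assms(2) by blast
  let ?S = "{x \<in> A. x \<le> y}"
  have fin: "finite ?S" using assms(1) by (simp add: loc_fin_def)
  have ne: "?S \<noteq> {}" using y by auto
  have "Min ?S \<in> ?S" using Min_in[OF fin ne] .
  moreover have "\<forall>x\<in>A. Min ?S \<le> x"
  proof
    fix x assume "x \<in> A"
    show "Min ?S \<le> x"
    proof (cases "x \<le> y")
      case True then show ?thesis using Min_le[OF fin] \<open>x \<in> A\<close> by simp
    next
      case False then show ?thesis using Min_le[OF fin, of y] y by simp
    qed
  qed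
  ultimately show ?thesis by blast
qed

lemma lf_bdd: assumes "loc_fin A" shows "\<exists>L. \<forall>x\<in>A. L \<le> x"
proof (cases "A = {}")
  case True then show ?thesis by simp
next
  case False then obtain a where "a \<in> A" "\<forall>x\<in>A. a \<le> x" using lf_min[OF assms] by blast
  then show ?thesis by blast
qed

lemma finite_int_interval: "finite {x::real. x \<in> \<int> \<and> L \<le> x \<and> x \<le> c}"
proof -
  have "{x::real. x \<in> \<int> \<and> L \<le> x \<and> x \<le> c} \<subseteq> real_of_int ` {\<lceil>L\<rceil>..\<lfloor>c\<rfloor>}"
  proof
    fix x assume "x \<in> {x::real. x \<in> \<int> \<and> L \<le> x \<and> x \<le> c}"
    then obtain k where k: "x = real_of_int k" "L \<le> x" "x \<le> c" by (auto elim: Ints_cases)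
    then have "k \<in> {\<lceil>L\<rceil>..\<lfloor>c\<rfloor>}" by (simp add: ceiling_le_iff le_floor_iff)
    then show "x \<in> real_of_int ` {\<lceil>L\<rceil>..\<lfloor>c\<rfloor>}" using k by blast
  qed
  then show ?thesis by (rule finite_subset) simp
qed

lemma lf_int: "A \<subseteq> \<int> \<Longrightarrow> (\<And>x. x \<in> A \<Longrightarrow> L \<le> x) \<Longrightarrow> loc_fin A"
  unfolding loc_fin_def
  by (intro allI finite_subset[OF _ finite_int_interval[of L]]) blast

lemma lf_union: "loc_fin A \<Longrightarrow> loc_fin B \<Longrightarrow> loc_fin (A \<union> B)"
  unfolding loc_fin_def
proof
  fix c assume "\<forall>c. finite {x \<in> A. x \<le> c}" "\<forall>c. finite {x \<in> B. x \<le> c}"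
  then have "finite ({x \<in> A. x \<le> c} \<union> {x \<in> B. x \<le> c})" by blast
  then show "finite {x \<in> A \<union> B. x \<le> c}" by (rule finite_subset[rotated]) blast
qed

lemma lf_UN: "finite I \<Longrightarrow> (\<And>i. i \<in> I \<Longrightarrow> loc_fin (A i)) \<Longrightarrow> loc_fin (\<Union>i\<in>I. A i)"
  unfolding loc_fin_def
proof
  fix c assume "finite I" "\<And>i. i \<in> I \<Longrightarrow> \<forall>c. finite {x \<in> A i. x \<le> c}"
  then have "finite (\<Union>i\<in>I. {x \<in> A i. x \<le> c})" by blast
  then show "finite {x \<in> (\<Union>i\<in>I. A i). x \<le> c}" by (rule finite_subset[rotated]) blast
qed

lemma lf_shift: "loc_fin A \<Longrightarrow> loc_fin ((\<lambda>x. x + t) ` A)"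
  unfolding loc_fin_def
proof
  fix c assume "\<forall>c. finite {x \<in> A. x \<le> c}"
  then have "finite ((\<lambda>x. x + t) ` {x \<in> A. x \<le> c - t})" by blast
  moreover have "{x \<in> (\<lambda>x. x + t) ` A. x \<le> c} \<subseteq> (\<lambda>x. x + t) ` {x \<in> A. x \<le> c - t}"
    apply (rule subsetI)
    subgoal for y
    proof -
      assume "y \<in> {x \<in> (\<lambda>x. x + t) ` A. x \<le> c}"
      then obtain x where "x \<in> A" "y = x + t" "x + t \<le> c" by blast
      then have "x \<in> {x \<in> A. x \<le> c - t}" by simp
      then show ?thesis using \<open>y = x + t\<close> by blast
    qed
    done
  ultimately show "finite {x \<in> (\<lambda>x. x + t) ` A. x \<le> c}" by (rule finite_subset[rotated])
qed

lemma lf_insert: assumes "loc_fin A" shows "loc_fin (insert a A)"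
proof -
  have "loc_fin {a}" unfolding loc_fin_def by (simp add: finite_subset[of _ "{a}"])
  then show ?thesis using lf_union[OF _ assms, of "{a}"] by simp
qed

lemma lf_pos_min: assumes "loc_fin A" shows "\<exists>\<delta>>0. \<forall>x\<in>A. 0 < x \<longrightarrow> \<delta> \<le> x"
proof (cases "{x\<in>A. 0 < x} = {}")
  case True
  have "\<forall>x\<in>A. 0 < x \<longrightarrow> (1::real) \<le> x" using True by blast
  then show ?thesis using zero_less_one by blast
next
  case False
  have "{x\<in>A. 0 < x} \<subseteq> A" by blast
  then have "loc_fin {x\<in>A. 0 < x}" using lf_subset[OF assms] by blast
  then obtain a where a: "a \<in> {x\<in>A. 0 < x}" "\<forall>x\<in>{x\<in>A. 0 < x}. a \<le> x" using lf_min False by blast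
  from a(1) have "0 < a" by blast
  moreover from a(2) have "\<forall>x\<in>A. 0 < x \<longrightarrow> a \<le> x" by blast
  ultimately show ?thesis by blast
qed

definition LF :: "mon set \<Rightarrow> bool" where
  "LF A \<longleftrightarrow> loc_fin {g0. \<exists>g1 g2. (g0, g1, g2) \<in> A}
     \<and> (\<forall>g0. loc_fin {g1. \<exists>g2. (g0, g1, g2) \<in> A})
     \<and> (\<forall>g0 g1. loc_fin {g2. (g0, g1, g2) \<in> A})"

lemma LF_mono: assumes "LF B" "A \<subseteq> B" shows "LF A"
proof -
  have s1: "{g0. \<exists>g1 g2. (g0, g1, g2) \<in> A} \<subseteq> {g0. \<exists>g1 g2. (g0, g1, g2) \<in> B}" using assms(2) by blast
  have s2: "\<And>g0. {g1. \<exists>g2. (g0, g1, g2) \<in> A} \<subseteq> {g1. \<exists>g2. (g0, g1, g2) \<in> B}" using assms(2) by blast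
  have s3: "\<And>g0 g1. {g2. (g0, g1, g2) \<in> A} \<subseteq> {g2. (g0, g1, g2) \<in> B}" using assms(2) by blast
  have l1: "loc_fin {g0. \<exists>g1 g2. (g0, g1, g2) \<in> B}" using assms(1) by (simp add: LF_def)
  have l2: "\<And>g0. loc_fin {g1. \<exists>g2. (g0, g1, g2) \<in> B}" using assms(1) by (simp add: LF_def)
  have l3: "\<And>g0 g1. loc_fin {g2. (g0, g1, g2) \<in> B}" using assms(1) by (simp add: LF_def)
  show ?thesis unfolding LF_def
    using lf_subset[OF l1 s1] lf_subset[OF l2 s2] lf_subset[OF l3 s3] by blast
qed

lemma LF_wo: assumes "LF A" shows "wo A"
  unfolding wo_def
proof (intro allI impI)
  fix B assume BA: "B \<subseteq> A" and Bne: "B \<noteq> {}"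
  have LB: "LF B" using LF_mono[OF assms BA] .
  let ?B0 = "{g0. \<exists>g1 g2. (g0, g1, g2) \<in> B}"
  obtain b where "b \<in> B" using Bne by blast
  obtain b0 b1 b2 where "b = (b0, b1, b2)" using prod_cases3 by blast
  then have "b0 \<in> ?B0" using \<open>b \<in> B\<close> by blast
  then have "?B0 \<noteq> {}" by blast
  moreover have "loc_fin ?B0" using LB by (simp add: LF_def)
  ultimately obtain m0 where m0: "m0 \<in> ?B0" "\<forall>x\<in>?B0. m0 \<le> x" using lf_min by blast
  let ?B1 = "{g1. \<exists>g2. (m0, g1, g2) \<in> B}"
  have "?B1 \<noteq> {}" using m0(1) by blast
  moreover have "loc_fin ?B1" using LB by (simp add: LF_def)
  ultimately obtain m1 where m1: "m1 \<in> ?B1" "\<forall>x\<in>?B1. m1 \<le> x" using lf_min by blast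
  let ?B2 = "{g2. (m0, m1, g2) \<in> B}"
  have "?B2 \<noteq> {}" using m1(1) by blast
  moreover have "loc_fin ?B2" using LB by (simp add: LF_def)
  ultimately obtain m2 where m2: "m2 \<in> ?B2" "\<forall>x\<in>?B2. m2 \<le> x" using lf_min by blast
  show "\<exists>b\<in>B. \<forall>c\<in>B. b \<le> c"
  proof (intro bexI ballI)
    show "(m0, m1, m2) \<in> B" using m2(1) by simp
    fix c assume "c \<in> B"
    obtain c0 c1 c2 where c: "c = (c0, c1, c2)" using prod_cases3 by blast
    have h0: "m0 \<le> c0" using m0(2) \<open>c \<in> B\<close> c by blast
    have h1: "m0 = c0 \<Longrightarrow> m1 \<le> c1" using m1(2) \<open>c \<in> B\<close> c by blast
    have h2: "m0 = c0 \<Longrightarrow> m1 = c1 \<Longrightarrow> m2 \<le> c2" using m2(2) \<open>c \<in> B\<close> c by blast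
    show "(m0, m1, m2) \<le> c"
    proof (cases "m0 < c0")
      case True then show ?thesis unfolding c by simp
    next
      case False
      then have e0: "m0 = c0" using h0 by simp
      show ?thesis
      proof (cases "m1 < c1")
        case True then show ?thesis unfolding c using e0 by simp
      next
        case False
        then have "m1 = c1" using h1[OF e0] by simp
        then show ?thesis unfolding c using e0 h2[OF e0] by simp
      qed
    qed
  qed
qed




lemma sgrp_real_nonneg: assumes "F \<subseteq> {0..}" shows "x \<in> sgrp (+) F \<Longrightarrow> (0::real) \<le> x"
  by (induction rule: sgrp.induct) (use assms in auto)

lemma nsum_mono_real: "(0::real) \<in> T \<Longrightarrow> i \<le> j \<Longrightarrow> nsum T i \<subseteq> nsum T j"
proof (induction j)
  case 0 then show ?case by simp
next
  case (Suc j)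
  show ?case
  proof (cases "i = Suc j")
    case True then show ?thesis by simp
  next
    case False
    then have "nsum T i \<subseteq> nsum T j" using Suc by simp
    moreover have "nsum T j \<subseteq> nsum T (Suc j)"
    proof
      fix x assume "x \<in> nsum T j"
      then have "x = 0 + x" by simp
      then show "x \<in> nsum T (Suc j)" unfolding nsum.simps mem_Collect_eq
        using \<open>x \<in> nsum T j\<close> Suc.prems(1) by blast
    qed
    ultimately show ?thesis by blast
  qed
qed

lemma nsum_add_real: "x \<in> nsum T i \<Longrightarrow> y \<in> nsum T j \<Longrightarrow> (x::real) + y \<in> nsum T (i + j)"
proof (induction i arbitrary: x)
  case 0 then show ?case by simp
next
  case (Suc i)
  then obtain p q where "x = p + q" "p \<in> T" "q \<in> nsum T i" by auto
  then have "q + y \<in> nsum T (i + j)" using Suc.IH Suc.prems(2) by blast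
  then show ?case unfolding add_Suc nsum.simps mem_Collect_eq using \<open>x = p + q\<close> \<open>p \<in> T\<close>
    by (intro exI[of _ p] exI[of _ "q + y"]) (simp add: add.assoc)
qed

lemma nsum_finite_real: "finite T \<Longrightarrow> finite (nsum (T::real set) n)"
proof (induction n)
  case 0 then show ?case by simp
next
  case (Suc n)
  have "nsum T (Suc n) = (\<lambda>(p,q). p + q) ` (T \<times> nsum T n)" by auto
  then show ?case using Suc by simp
qed

lemma lf_sgrp:
  assumes F0: "F \<subseteq> {0..}" and lf: "loc_fin F"
  shows "loc_fin (sgrp (+) F)"
  unfolding loc_fin_def
proof
  fix c :: real
  obtain \<delta> where d: "\<delta> > 0" "\<forall>x\<in>F. 0 < x \<longrightarrow> \<delta> \<le> x" using lf_pos_min[OF lf] by blast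
  define T where "T = insert 0 {x \<in> F. x \<le> c}"
  have finT: "finite T" using lf by (simp add: T_def loc_fin_def)
  have T0: "(0::real) \<in> T" by (simp add: T_def)
  have key: "x \<in> sgrp (+) F \<Longrightarrow> x \<le> c \<Longrightarrow> x \<in> nsum T (nat \<lfloor>x / \<delta>\<rfloor>)" for x
  proof (induction rule: sgrp.induct)
    case (gen x)
    show ?case
    proof (cases "x = 0")
      case True then show ?thesis by simp
    next
      case False
      then have "0 < x" using gen F0 by force
      then have "\<delta> \<le> x" using d gen by blast
      then have "1 \<le> x / \<delta>" using d by simp
      then have "1 \<le> nat \<lfloor>x / \<delta>\<rfloor>" by linarith
      moreover have "x \<in> nsum T 1" using gen by (auto simp: T_def intro!: exI[of _ x])
      ultimately show ?thesis using nsum_mono_real[OF T0] by blast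
    qed
  next
    case (add x y)
    have x0: "0 \<le> x" "0 \<le> y" using sgrp_real_nonneg[OF F0] add.hyps by blast+
    then have "x \<le> c" "y \<le> c" using add.prems by simp_all
    then have "x \<in> nsum T (nat \<lfloor>x / \<delta>\<rfloor>)" "y \<in> nsum T (nat \<lfloor>y / \<delta>\<rfloor>)" using add.IH by blast+
    then have "x + y \<in> nsum T (nat \<lfloor>x / \<delta>\<rfloor> + nat \<lfloor>y / \<delta>\<rfloor>)" by (rule nsum_add_real)
    moreover have "nat \<lfloor>x / \<delta>\<rfloor> + nat \<lfloor>y / \<delta>\<rfloor> \<le> nat \<lfloor>(x + y) / \<delta>\<rfloor>"
    proof -
      have "\<lfloor>x / \<delta>\<rfloor> + \<lfloor>y / \<delta>\<rfloor> \<le> \<lfloor>x / \<delta> + y / \<delta>\<rfloor>" by (rule le_floor_add)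
      moreover have "0 \<le> \<lfloor>x / \<delta>\<rfloor>" "0 \<le> \<lfloor>y / \<delta>\<rfloor>" using x0 d by simp_all
      ultimately show ?thesis by (simp add: add_divide_distrib nat_add_distrib[symmetric])
    qed
    ultimately show ?case using nsum_mono_real[OF T0] by blast
  qed
  have "{x \<in> sgrp (+) F. x \<le> c} \<subseteq> nsum T (nat \<lfloor>c / \<delta>\<rfloor>)"
  proof
    fix x assume "x \<in> {x \<in> sgrp (+) F. x \<le> c}"
    then have "x \<in> sgrp (+) F" "x \<le> c" by simp_all
    then have "x \<in> nsum T (nat \<lfloor>x / \<delta>\<rfloor>)" using key by blast
    moreover have "nat \<lfloor>x / \<delta>\<rfloor> \<le> nat \<lfloor>c / \<delta>\<rfloor>"
      using \<open>x \<le> c\<close> d by (intro nat_mono floor_mono divide_right_mono) simp_all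
    ultimately show "x \<in> nsum T (nat \<lfloor>c / \<delta>\<rfloor>)" using nsum_mono_real[OF T0] by blast
  qed
  then show "finite {x \<in> sgrp (+) F. x \<le> c}" using nsum_finite_real[OF finT] finite_subset by blast
qed




definition genOK :: "mon set \<Rightarrow> bool" where
 "genOK G \<longleftrightarrow> (\<forall>y\<in>G. 0 \<le> fst y \<and> fst (snd y) \<in> \<int> \<and> snd (snd y) \<in> \<int> \<and> 0 < y)
   \<and> (\<forall>y\<in>G. fst y = 0 \<longrightarrow> 0 \<le> fst (snd y) \<and> 0 \<le> fst (snd y) + snd (snd y))
   \<and> (\<forall>y\<in>G. 0 < fst y \<longrightarrow> snd (snd y) = 0)
   \<and> loc_fin (fst ` G)
   \<and> (\<forall>c. \<exists>L. \<forall>y\<in>G. 0 < fst y \<and> fst y \<le> c \<longrightarrow> L \<le> fst (snd y))"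

lemma genOK_1: "genOK G \<Longrightarrow> y \<in> G \<Longrightarrow> 0 \<le> fst y \<and> fst (snd y) \<in> \<int> \<and> snd (snd y) \<in> \<int> \<and> 0 < y"
  unfolding genOK_def by (elim conjE) (drule bspec, assumption)

lemma genOK_2: "genOK G \<Longrightarrow> y \<in> G \<Longrightarrow> fst y = 0 \<Longrightarrow> 0 \<le> fst (snd y) \<and> 0 \<le> fst (snd y) + snd (snd y)"
  unfolding genOK_def by (elim conjE) (drule bspec, assumption, simp)

lemma genOK_3: "genOK G \<Longrightarrow> y \<in> G \<Longrightarrow> 0 < fst y \<Longrightarrow> snd (snd y) = 0"
  unfolding genOK_def by (elim conjE) (drule bspec, assumption, simp)

lemma genOK_4: "genOK G \<Longrightarrow> loc_fin (fst ` G)"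
  unfolding genOK_def by (elim conjE)

lemma genOK_5: "genOK G \<Longrightarrow> \<exists>L. \<forall>y\<in>G. 0 < fst y \<and> fst y \<le> c \<longrightarrow> L \<le> fst (snd y)"
  unfolding genOK_def by (elim conjE) (erule allE)

lemma M_basic:
  assumes gG: "genOK G"
  shows "x \<in> sgrp add_mon G \<Longrightarrow> 0 \<le> fst x \<and> fst (snd x) \<in> \<int> \<and> snd (snd x) \<in> \<int> \<and> 0 < x
     \<and> fst x \<in> sgrp (+) (fst ` G)"
proof (induction rule: sgrp.induct)
  case (gen x)
  have "fst x \<in> sgrp (+) (fst ` G)" using gen by (intro sgrp.gen) (rule imageI)
  then show ?case using genOK_1[OF gG gen] by simp
next
  case (add x y)
  from add.IH have hx: "0 \<le> fst x" "fst (snd x) \<in> \<int>" "snd (snd x) \<in> \<int>" "0 < x" "fst x \<in> sgrp (+) (fst ` G)"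
    by simp_all
  from add.IH have hy: "0 \<le> fst y" "fst (snd y) \<in> \<int>" "snd (snd y) \<in> \<int>" "0 < y" "fst y \<in> sgrp (+) (fst ` G)"
    by simp_all
  have "0 < x + y" using mon_add_pos[OF hx(4) less_imp_le[OF hy(4)]] .
  moreover have "fst x + fst y \<in> sgrp (+) (fst ` G)" using sgrp.add[OF hx(5) hy(5)] .
  ultimately show ?case using hx hy by (simp add: add_mon_eq)
qed

lemma M_delta:
  assumes gG: "genOK G"
  shows "\<exists>\<delta>>0. \<forall>x\<in>sgrp add_mon G. 0 < fst x \<longrightarrow> \<delta> \<le> fst x"
proof -
  have "loc_fin (fst ` G)" using genOK_4[OF gG] .
  then obtain \<delta> where d: "\<delta> > 0" "\<forall>x\<in>fst ` G. 0 < x \<longrightarrow> \<delta> \<le> x" using lf_pos_min by blast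
  have "x \<in> sgrp add_mon G \<Longrightarrow> 0 < fst x \<Longrightarrow> \<delta> \<le> fst x" for x
  proof (induction rule: sgrp.induct)
    case (gen x) then show ?case using d by blast
  next
    case (add x y)
    have "0 \<le> fst x" "0 \<le> fst y" using M_basic[OF gG add.hyps(1)] M_basic[OF gG add.hyps(2)] by simp_all
    show ?case
    proof (cases "0 < fst x")
      case True then have "\<delta> \<le> fst x" using add.IH(1) by blast
      then show ?thesis using \<open>0 \<le> fst y\<close> by (simp add: add_mon_eq)
    next
      case False then have "0 < fst y" using add.prems \<open>0 \<le> fst x\<close> by (simp add: add_mon_eq)
      then have "\<delta> \<le> fst y" using add.IH(2) by blast
      then show ?thesis using \<open>0 \<le> fst x\<close> by (simp add: add_mon_eq)
    qed
  qed
  then show ?thesis using d(1) by blast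
qed

lemma M_bound:
  assumes gG: "genOK G"
  shows "\<exists>lam\<ge>0. \<forall>x\<in>sgrp add_mon G. fst x \<le> c \<longrightarrow>
     - lam * fst x \<le> fst (snd x) \<and> - lam * fst x \<le> fst (snd x) + snd (snd x)"
proof -
  have "loc_fin (fst ` G)" using genOK_4[OF gG] .
  then obtain \<delta> where d: "\<delta> > 0" "\<forall>x\<in>fst ` G. 0 < x \<longrightarrow> \<delta> \<le> x" using lf_pos_min by blast
  obtain L where L: "\<forall>y\<in>G. 0 < fst y \<and> fst y \<le> c \<longrightarrow> L \<le> fst (snd y)"
    using genOK_5[OF gG] by blast
  define lam where "lam = max 0 (- L) / \<delta>"
  have l0: "lam \<ge> 0" using d by (simp add: lam_def)
  have "x \<in> sgrp add_mon G \<Longrightarrow> fst x \<le> c \<Longrightarrow>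
     - lam * fst x \<le> fst (snd x) \<and> - lam * fst x \<le> fst (snd x) + snd (snd x)" for x
  proof (induction rule: sgrp.induct)
    case (gen y)
    have y0: "0 \<le> fst y" using genOK_1[OF gG gen.hyps] by simp
    show ?case
    proof (cases "fst y = 0")
      case True then have "0 \<le> fst (snd y) \<and> 0 \<le> fst (snd y) + snd (snd y)" using genOK_2[OF gG gen.hyps] by simp
      then show ?thesis using True by simp
    next
      case False
      then have yp: "0 < fst y" using y0 by simp
      then have "\<delta> \<le> fst y" using d gen.hyps by blast
      then have "lam * \<delta> \<le> lam * fst y" using l0 by (simp add: mult_left_mono)
      moreover have "lam * \<delta> = max 0 (- L)" using d by (simp add: lam_def)
      ultimately have "- lam * fst y \<le> L" by linarith
      moreover have "L \<le> fst (snd y)" using L gen yp by blast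
      moreover have "snd (snd y) = 0" using genOK_3[OF gG gen.hyps yp] .
      ultimately show ?thesis by simp
    qed
  next
    case (add x y)
    have "0 \<le> fst x" "0 \<le> fst y" using M_basic[OF gG add.hyps(1)] M_basic[OF gG add.hyps(2)] by simp_all
    then have "fst x \<le> c" "fst y \<le> c" using add.prems by (simp_all add: add_mon_eq)
    then have "- lam * fst x \<le> fst (snd x) \<and> - lam * fst x \<le> fst (snd x) + snd (snd x)"
      "- lam * fst y \<le> fst (snd y) \<and> - lam * fst y \<le> fst (snd y) + snd (snd y)" using add.IH by blast+
    then show ?case by (simp add: add_mon_eq algebra_simps)
  qed
  then show ?thesis using l0 by blast
qed

lemma M0_basic:
  assumes gG: "genOK G" and x: "x \<in> insert 0 (sgrp add_mon G)"
  shows "0 \<le> fst x \<and> fst (snd x) \<in> \<int> \<and> snd (snd x) \<in> \<int> \<and> fst x \<in> insert 0 (sgrp (+) (fst ` G))"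
proof (cases "x = 0")
  case True then show ?thesis by (simp add: zero_prod_def)
next
  case False then have "x \<in> sgrp add_mon G" using x by simp
  then show ?thesis using M_basic[OF gG] by simp
qed

lemma M0_bound:
  assumes gG: "genOK G"
  shows "\<exists>lam\<ge>0. \<forall>x\<in>insert 0 (sgrp add_mon G). fst x \<le> c \<longrightarrow>
     - lam * fst x \<le> fst (snd x) \<and> - lam * fst x \<le> fst (snd x) + snd (snd x)"
proof -
  obtain lam where l: "lam \<ge> 0" "\<forall>x\<in>sgrp add_mon G. fst x \<le> c \<longrightarrow>
     - lam * fst x \<le> fst (snd x) \<and> - lam * fst x \<le> fst (snd x) + snd (snd x)"
    using M_bound[OF gG] by blast
  have "- lam * fst (0::mon) \<le> fst (snd (0::mon)) \<and> - lam * fst (0::mon) \<le> fst (snd (0::mon)) + snd (snd (0::mon))"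
    by (simp add: zero_prod_def)
  then show ?thesis using l by blast
qed




lemma fG_nonneg: "genOK G \<Longrightarrow> fst ` G \<subseteq> {0..}"
  using genOK_1 by fastforce

lemma LF_M0:
  assumes gG: "genOK G"
  shows "LF (insert 0 (sgrp add_mon G))"
  unfolding LF_def
proof (intro conjI allI)
  let ?M0 = "insert 0 (sgrp add_mon G)"
  have lf0: "loc_fin (insert 0 (sgrp (+) (fst ` G)))"
    using lf_insert[OF lf_sgrp[OF fG_nonneg[OF gG] genOK_4[OF gG]]] .
  show "loc_fin {g0. \<exists>g1 g2. (g0, g1, g2) \<in> ?M0}"
  proof (rule lf_subset[OF lf0])
    show "{g0. \<exists>g1 g2. (g0, g1, g2) \<in> ?M0} \<subseteq> insert 0 (sgrp (+) (fst ` G))"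
    proof
      fix g0 assume "g0 \<in> {g0. \<exists>g1 g2. (g0, g1, g2) \<in> ?M0}"
      then obtain g1 g2 where "(g0, g1, g2) \<in> ?M0" by blast
      from M0_basic[OF gG this] show "g0 \<in> insert 0 (sgrp (+) (fst ` G))" by simp
    qed
  qed
  fix g0
  obtain lam where lam: "lam \<ge> 0" "\<forall>x\<in>?M0. fst x \<le> g0 \<longrightarrow>
     - lam * fst x \<le> fst (snd x) \<and> - lam * fst x \<le> fst (snd x) + snd (snd x)"
    using M0_bound[OF gG, of g0] by blast
  show "loc_fin {g1. \<exists>g2. (g0, g1, g2) \<in> ?M0}"
  proof (rule lf_int[of _ "- lam * g0"])
    show "{g1. \<exists>g2. (g0, g1, g2) \<in> ?M0} \<subseteq> \<int>"
    proof
      fix g1 assume "g1 \<in> {g1. \<exists>g2. (g0, g1, g2) \<in> ?M0}"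
      then obtain g2 where "(g0, g1, g2) \<in> ?M0" by blast
      from M0_basic[OF gG this] show "g1 \<in> \<int>" by simp
    qed
    fix g1 assume "g1 \<in> {g1. \<exists>g2. (g0, g1, g2) \<in> ?M0}"
    then obtain g2 where "(g0, g1, g2) \<in> ?M0" by blast
    from bspec[OF lam(2) this] show "- lam * g0 \<le> g1" by simp
  qed
  fix g1
  show "loc_fin {g2. (g0, g1, g2) \<in> ?M0}"
  proof (rule lf_int[of _ "- lam * g0 - g1"])
    show "{g2. (g0, g1, g2) \<in> ?M0} \<subseteq> \<int>"
    proof
      fix g2 assume "g2 \<in> {g2. (g0, g1, g2) \<in> ?M0}"
      then have "(g0, g1, g2) \<in> ?M0" by (simp only: mem_Collect_eq)
      from M0_basic[OF gG this] show "g2 \<in> \<int>" by simp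
    qed
    fix g2 assume "g2 \<in> {g2. (g0, g1, g2) \<in> ?M0}"
    then have "(g0, g1, g2) \<in> ?M0" by simp
    from bspec[OF lam(2) this] have "- lam * g0 \<le> g1 + g2" by simp
    then show "- lam * g0 - g1 \<le> g2" by simp
  qed
qed

lemma LF_shift:
  assumes "LF A"
  shows "LF ((\<lambda>x. x + (a, 0, 0)) ` A)"
  unfolding LF_def
proof (intro conjI allI)
  let ?S = "(\<lambda>x. x + (a, 0, 0)) ` A"
  have l1: "loc_fin {g0. \<exists>g1 g2. (g0, g1, g2) \<in> A}" using assms by (simp add: LF_def)
  have l2: "\<And>g0. loc_fin {g1. \<exists>g2. (g0, g1, g2) \<in> A}" using assms by (simp add: LF_def)
  have l3: "\<And>g0 g1. loc_fin {g2. (g0, g1, g2) \<in> A}" using assms by (simp add: LF_def)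
  have mem: "(g0, g1, g2) \<in> ?S \<longleftrightarrow> (g0 - a, g1, g2) \<in> A" for g0 g1 g2
  proof
    assume "(g0, g1, g2) \<in> ?S"
    then obtain x where "x \<in> A" "(g0, g1, g2) = x + (a, 0, 0)" by blast
    moreover obtain x0 x1 x2 where "x = (x0, x1, x2)" using prod_cases3 by blast
    ultimately show "(g0 - a, g1, g2) \<in> A" by simp
  next
    assume "(g0 - a, g1, g2) \<in> A"
    moreover have "(g0, g1, g2) = (g0 - a, g1, g2) + (a, 0, 0)" by simp
    ultimately show "(g0, g1, g2) \<in> ?S" by blast
  qed
  show "loc_fin {g0. \<exists>g1 g2. (g0, g1, g2) \<in> ?S}"
  proof (rule lf_subset[OF lf_shift[OF l1, of a]])
    show "{g0. \<exists>g1 g2. (g0, g1, g2) \<in> ?S} \<subseteq> (\<lambda>x. x + a) ` {g0. \<exists>g1 g2. (g0, g1, g2) \<in> A}"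
    proof
      fix g0 assume "g0 \<in> {g0. \<exists>g1 g2. (g0, g1, g2) \<in> ?S}"
      then obtain g1 g2 where "(g0, g1, g2) \<in> ?S" by blast
      then have "g0 - a \<in> {g0. \<exists>g1 g2. (g0, g1, g2) \<in> A}" using mem by blast
      moreover have "g0 = (g0 - a) + a" by simp
      ultimately show "g0 \<in> (\<lambda>x. x + a) ` {g0. \<exists>g1 g2. (g0, g1, g2) \<in> A}" by blast
    qed
  qed
  fix g0
  show "loc_fin {g1. \<exists>g2. (g0, g1, g2) \<in> ?S}"
    using l2[of "g0 - a"] mem by simp
  fix g1
  show "loc_fin {g2. (g0, g1, g2) \<in> ?S}"
    using l3[of "g0 - a" g1] mem by simp
qed

lemma nsum_M_sub: "nsum (sgrp add_mon G) n \<subseteq> insert 0 (sgrp add_mon G)"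
proof (induction n)
  case 0 then show ?case by simp
next
  case (Suc n)
  show ?case
  proof
    fix x assume "x \<in> nsum (sgrp add_mon G) (Suc n)"
    then obtain p q where x: "x = p + q" "p \<in> sgrp add_mon G" "q \<in> nsum (sgrp add_mon G) n"
      by (simp only: nsum.simps mem_Collect_eq) blast
    show "x \<in> insert 0 (sgrp add_mon G)"
    proof (cases "q = 0")
      case True then show ?thesis using x by simp
    next
      case False then have "q \<in> sgrp add_mon G" using x(3) Suc.IH by blast
      then have "add_mon p q \<in> sgrp add_mon G" using x(2) by (rule sgrp.add[rotated])
      then show ?thesis using x(1) by (simp add: add_mon_eq)
    qed
  qed
qed

lemma fiber_finite:
  assumes gG: "genOK G"
  shows "finite {(p,q). p \<in> insert 0 (sgrp add_mon G) \<and> q \<in> insert 0 (sgrp add_mon G) \<and> p + q = r}"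
proof -
  let ?M0 = "insert 0 (sgrp add_mon G)"
  obtain lam where lam: "lam \<ge> 0" "\<forall>x\<in>?M0. fst x \<le> fst r \<longrightarrow>
     - lam * fst x \<le> fst (snd x) \<and> - lam * fst x \<le> fst (snd x) + snd (snd x)"
    using M0_bound[OF gG, of "fst r"] by blast
  define R where "R = lam * fst r"
  define F0c where "F0c = {x \<in> insert 0 (sgrp (+) (fst ` G)). x \<le> fst r}"
  define Z1 where "Z1 = {x. x \<in> \<int> \<and> - R \<le> x \<and> x \<le> fst (snd r) + R}"
  define Z2 where "Z2 = {x. x \<in> \<int> \<and> - R - (fst (snd r) + R) \<le> x \<and> x \<le> snd (snd r) + fst (snd r) + R + R}"
  have lf0: "loc_fin (insert 0 (sgrp (+) (fst ` G)))"
    using lf_insert[OF lf_sgrp[OF fG_nonneg[OF gG] genOK_4[OF gG]]] .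
  have fin: "finite (F0c \<times> Z1 \<times> Z2)"
    using lf0 finite_int_interval by (simp add: F0c_def Z1_def Z2_def loc_fin_def)
  have sub: "{(p,q). p \<in> ?M0 \<and> q \<in> ?M0 \<and> p + q = r} \<subseteq> (\<lambda>p. (p, r - p)) ` (F0c \<times> Z1 \<times> Z2)"
  proof
    fix x assume "x \<in> {(p,q). p \<in> ?M0 \<and> q \<in> ?M0 \<and> p + q = r}"
    moreover obtain p q where x: "x = (p, q)" by (cases x)
    ultimately have pq: "p \<in> ?M0" "q \<in> ?M0" "p + q = r" by simp_all
    then have qr: "q = r - p" using pq(3) by (metis add_diff_cancel_left')
    have bp: "0 \<le> fst p" "fst (snd p) \<in> \<int>" "snd (snd p) \<in> \<int>" "fst p \<in> insert 0 (sgrp (+) (fst ` G))"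
      using M0_basic[OF gG pq(1)] by simp_all
    have bq: "0 \<le> fst q" using M0_basic[OF gG pq(2)] by simp
    have s0: "fst p + fst q = fst r" "fst (snd p) + fst (snd q) = fst (snd r)"
      "snd (snd p) + snd (snd q) = snd (snd r)" using pq(3) by auto
    have "fst p \<le> fst r" "fst q \<le> fst r" using s0(1) bp(1) bq by linarith+
    then have lp: "- lam * fst p \<le> fst (snd p) \<and> - lam * fst p \<le> fst (snd p) + snd (snd p)"
      and lq: "- lam * fst q \<le> fst (snd q) \<and> - lam * fst q \<le> fst (snd q) + snd (snd q)"
      using bspec[OF lam(2) pq(1)] bspec[OF lam(2) pq(2)] by simp_all
    have A: "lam * fst p \<le> R" "lam * fst q \<le> R"
      unfolding R_def using \<open>fst p \<le> fst r\<close> \<open>fst q \<le> fst r\<close> lam(1) by (simp_all add: mult_left_mono)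
    have "fst p \<in> F0c" using bp(4) \<open>fst p \<le> fst r\<close> by (simp add: F0c_def)
    moreover have "fst (snd p) \<in> Z1" using bp(2) lp lq A s0 by (simp add: Z1_def)
    moreover have "snd (snd p) \<in> Z2" using bp(3) lp lq A s0 by (simp add: Z2_def)
    ultimately have "p \<in> F0c \<times> Z1 \<times> Z2" by (simp add: mem_Times_iff)
    then show "x \<in> (\<lambda>p. (p, r - p)) ` (F0c \<times> Z1 \<times> Z2)" using x qr by blast
  qed
  show ?thesis using finite_subset[OF sub finite_imageI[OF fin]] .
qed

lemma nsum_count_finite:
  assumes gG: "genOK G"
  shows "finite {n. r \<in> nsum (sgrp add_mon G) n}"
proof -
  let ?M = "sgrp add_mon G"
  obtain \<delta> where d: "\<delta> > 0" "\<forall>x\<in>?M. 0 < fst x \<longrightarrow> \<delta> \<le> fst x" using M_delta[OF gG] by blast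
  obtain lam where lam: "lam \<ge> 0" "\<forall>x\<in>insert 0 ?M. fst x \<le> fst r \<longrightarrow>
     - lam * fst x \<le> fst (snd x) \<and> - lam * fst x \<le> fst (snd x) + snd (snd x)"
    using M0_bound[OF gG, of "fst r"] by blast
  define P where "P = (\<lambda>x::mon. fst x / \<delta> + (fst (snd x) + lam * fst x)
     + (fst (snd x) + snd (snd x) + lam * fst x))"
  have Padd: "P (p + q) = P p + P q" for p q
    by (simp add: P_def algebra_simps add_divide_distrib)
  have P1: "1 \<le> P p" if p: "p \<in> ?M" "fst p \<le> fst r" for p
  proof -
    have bp: "0 \<le> fst p" "fst (snd p) \<in> \<int>" "snd (snd p) \<in> \<int>" "0 < p" using M_basic[OF gG p(1)] by simp_all
    have lp: "- lam * fst p \<le> fst (snd p)" "- lam * fst p \<le> fst (snd p) + snd (snd p)"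
      using bspec[OF lam(2), of p] p by simp_all
    show ?thesis
    proof (cases "fst p = 0")
      case False
      then have "\<delta> \<le> fst p" using d(2) p(1) bp(1) by simp
      then have "1 \<le> fst p / \<delta>" using d(1) by simp
      then show ?thesis using lp by (simp add: P_def)
    next
      case True
      obtain i where i: "fst (snd p) = of_int i" using bp(2) Ints_cases by blast
      obtain j where j: "snd (snd p) = of_int j" using bp(3) Ints_cases by blast
      have pe: "p = (0, of_int i, of_int j)" using True i j by (metis prod.collapse)
      have "0 \<le> i" "0 \<le> i + j" using lp True i j by simp_all
      moreover have "\<not> (i = 0 \<and> j = 0)" using bp(4) pe by (auto simp: zero_prod_def)
      ultimately have "1 \<le> 2 * i + j" by linarith
      then have "1 \<le> real_of_int (2 * i + j)" by linarith
      then show ?thesis using True i j by (simp add: P_def)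
    qed
  qed
  have claim: "s \<in> nsum ?M n \<Longrightarrow> fst s \<le> fst r \<Longrightarrow> real n \<le> P s" for n s
  proof (induction n arbitrary: s)
    case 0 then show ?case by (simp add: P_def zero_prod_def)
  next
    case (Suc n)
    then obtain p q where x: "s = p + q" "p \<in> ?M" "q \<in> nsum ?M n"
      by (simp only: nsum.simps mem_Collect_eq) blast
    have "q \<in> insert 0 ?M" using x(3) nsum_M_sub by blast
    then have "0 \<le> fst q" using M0_basic[OF gG] by blast
    have "0 \<le> fst p" using M_basic[OF gG x(2)] by simp
    have "fst p \<le> fst r" "fst q \<le> fst r" using Suc.prems(2) x(1) \<open>0 \<le> fst q\<close> \<open>0 \<le> fst p\<close> by simp_all
    then have "real n \<le> P q" "1 \<le> P p" using Suc.IH[OF x(3)] P1[OF x(2)] by simp_all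
    then show ?case using x(1) Padd by simp
  qed
  have "{n. r \<in> nsum ?M n} \<subseteq> {..nat \<lceil>P r\<rceil>}"
  proof
    fix n assume "n \<in> {n. r \<in> nsum ?M n}"
    then have "real n \<le> P r" using claim by simp
    then show "n \<in> {..nat \<lceil>P r\<rceil>}" by (simp add: le_nat_iff ceiling_le_iff) linarith
  qed
  then show ?thesis using finite_subset by blast
qed

lemma goodM_M:
  assumes gG: "genOK G" and d: "(0,1,0) \<in> sgrp add_mon G"
  shows "goodM (sgrp add_mon G)"
proof -
  let ?M = "sgrp add_mon G"
  have "closedM ?M" unfolding closedM_def
  proof (intro conjI ballI)
    fix x assume "x \<in> ?M" then show "0 < x" using M_basic[OF gG] by blast
  next
    fix x y assume "x \<in> ?M" "y \<in> ?M" then show "x + y \<in> ?M" using sgrp.add by (metis add_mon_eq)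
  qed (rule d)
  moreover have "wo ?M" using wo_subset[OF LF_wo[OF LF_M0[OF gG]]] by blast
  ultimately show ?thesis unfolding goodM_def using fiber_finite[OF gG] nsum_count_finite[OF gG] by blast
qed




definition Gmain :: "ts \<Rightarrow> real \<Rightarrow> int \<Rightarrow> mon set" where
  "Gmain g \<alpha> m = {(\<beta> - \<alpha>, l - real_of_int m, 0) | \<beta> l.
                     (\<beta>, l, 0) \<in> supp g \<and> (\<beta>, l) \<noteq> (\<alpha>, real_of_int m)}"

lemma gens3_eq: "gens3 g \<alpha> m = Gmain g \<alpha> m \<union> {(0, 1, -1), (0, 0, 1)}"
  by (simp add: gens3_def Gmain_def)

definition emb :: "real \<times> real \<Rightarrow> mon" where "emb p = (fst p, snd p, 0)"

lemma gens2_eq: "emb ` gens2 g \<alpha> = Gmain g \<alpha> 0 \<union> {(0, 1, 0)}"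
proof -
  have "emb ` {(\<beta> - \<alpha>, l) | \<beta> l. (\<beta>, l, 0) \<in> supp g \<and> (\<beta>, l) \<noteq> (\<alpha>, 0)} = Gmain g \<alpha> 0"
  proof (rule set_eqI)
    fix x
    show "x \<in> emb ` {(\<beta> - \<alpha>, l) | \<beta> l. (\<beta>, l, 0) \<in> supp g \<and> (\<beta>, l) \<noteq> (\<alpha>, 0)} \<longleftrightarrow> x \<in> Gmain g \<alpha> 0"
    proof
      assume "x \<in> emb ` {(\<beta> - \<alpha>, l) | \<beta> l. (\<beta>, l, 0) \<in> supp g \<and> (\<beta>, l) \<noteq> (\<alpha>, 0)}"
      then obtain \<beta> l where "x = emb (\<beta> - \<alpha>, l)" "(\<beta>, l, 0) \<in> supp g" "(\<beta>, l) \<noteq> (\<alpha>, 0)" by blast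
      then show "x \<in> Gmain g \<alpha> 0" unfolding Gmain_def emb_def by simp
    next
      assume "x \<in> Gmain g \<alpha> 0"
      then obtain \<beta> l where "x = (\<beta> - \<alpha>, l, 0)" "(\<beta>, l, 0) \<in> supp g" "(\<beta>, l) \<noteq> (\<alpha>, 0)"
        unfolding Gmain_def by auto
      moreover have "(\<beta> - \<alpha>, l, 0) = emb (\<beta> - \<alpha>, l)" by (simp add: emb_def)
      ultimately show "x \<in> emb ` {(\<beta> - \<alpha>, l) | \<beta> l. (\<beta>, l, 0) \<in> supp g \<and> (\<beta>, l) \<noteq> (\<alpha>, 0)}" by blast
    qed
  qed
  then show ?thesis by (simp add: gens2_def image_Un emb_def)
qed

lemma sgrp_emb: "sgrp add_mon (emb ` G) = emb ` sgrp add2 G"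
proof
  show "sgrp add_mon (emb ` G) \<subseteq> emb ` sgrp add2 G"
  proof
    fix x assume "x \<in> sgrp add_mon (emb ` G)"
    then show "x \<in> emb ` sgrp add2 G"
    proof (induction rule: sgrp.induct)
      case (gen x) then show ?case by (blast intro: sgrp.gen)
    next
      case (add x y)
      then obtain a b where "x = emb a" "y = emb b" "a \<in> sgrp add2 G" "b \<in> sgrp add2 G" by blast
      moreover have "add_mon (emb a) (emb b) = emb (add2 a b)" by (simp add: add_mon_def emb_def add2_def)
      ultimately show ?case by (blast intro: sgrp.add)
    qed
  qed
  show "emb ` sgrp add2 G \<subseteq> sgrp add_mon (emb ` G)"
  proof
    fix x assume "x \<in> emb ` sgrp add2 G"
    then obtain a where a: "a \<in> sgrp add2 G" "x = emb a" by blast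
    have "emb a \<in> sgrp add_mon (emb ` G)" using a(1)
    proof (induction rule: sgrp.induct)
      case (gen x) then show ?case by (blast intro: sgrp.gen)
    next
      case (add x y)
      have "add_mon (emb x) (emb y) = emb (add2 x y)" by (simp add: add_mon_def emb_def add2_def)
      then show ?case using add.IH sgrp.add by metis
    qed
    then show "x \<in> sgrp add_mon (emb ` G)" using a(2) by simp
  qed
qed

lemma genOK_union:
  assumes "genOK A" "genOK B" shows "genOK (A \<union> B)"
proof -
  have lf: "loc_fin (fst ` (A \<union> B))" using lf_union[OF genOK_4[OF assms(1)] genOK_4[OF assms(2)]] by (simp add: image_Un)
  have b: "\<exists>L. \<forall>y\<in>A \<union> B. 0 < fst y \<and> fst y \<le> c \<longrightarrow> L \<le> fst (snd y)" for c
  proof -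
    obtain L1 where L1: "\<forall>y\<in>A. 0 < fst y \<and> fst y \<le> c \<longrightarrow> L1 \<le> fst (snd y)" using genOK_5[OF assms(1)] by blast
    obtain L2 where L2: "\<forall>y\<in>B. 0 < fst y \<and> fst y \<le> c \<longrightarrow> L2 \<le> fst (snd y)" using genOK_5[OF assms(2)] by blast
    have "\<forall>y\<in>A \<union> B. 0 < fst y \<and> fst y \<le> c \<longrightarrow> min L1 L2 \<le> fst (snd y)"
    proof
      fix y assume "y \<in> A \<union> B"
      then show "0 < fst y \<and> fst y \<le> c \<longrightarrow> min L1 L2 \<le> fst (snd y)"
      proof
        assume "y \<in> A" then show ?thesis using L1 by (meson min.coboundedI1)
      next
        assume "y \<in> B" then show ?thesis using L2 by (meson min.coboundedI2)
      qed
    qed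
    then show ?thesis by blast
  qed
  have c1: "\<forall>y\<in>A \<union> B. 0 \<le> fst y \<and> fst (snd y) \<in> \<int> \<and> snd (snd y) \<in> \<int> \<and> 0 < y"
    using genOK_1[OF assms(1)] genOK_1[OF assms(2)] by blast
  have c2: "\<forall>y\<in>A \<union> B. fst y = 0 \<longrightarrow> 0 \<le> fst (snd y) \<and> 0 \<le> fst (snd y) + snd (snd y)"
    using genOK_2[OF assms(1)] genOK_2[OF assms(2)] by blast
  have c3: "\<forall>y\<in>A \<union> B. 0 < fst y \<longrightarrow> snd (snd y) = 0"
    using genOK_3[OF assms(1)] genOK_3[OF assms(2)] by blast
  show ?thesis unfolding genOK_def using c1 c2 c3 lf b by blast
qed

lemma genOK_zero:
  assumes "\<forall>y\<in>S. fst y = 0 \<and> fst (snd y) \<in> \<int> \<and> snd (snd y) \<in> \<int> \<and> 0 < y \<and> 0 \<le> fst (snd y) \<and> 0 \<le> fst (snd y) + snd (snd y)"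
  shows "genOK S"
proof -
  have "fst ` S \<subseteq> {0}" using assms by auto
  moreover have "loc_fin {0::real}" unfolding loc_fin_def by (simp add: finite_subset[of _ "{0}"])
  ultimately have lf: "loc_fin (fst ` S)" using lf_subset by blast
  show ?thesis unfolding genOK_def
  proof (intro conjI ballI allI impI)
  qed (use assms lf in auto)
qed

lemma genOK_special1: "genOK {(0::real, 1::real, -1::real), (0, 0, 1)}"
  by (rule genOK_zero) (auto simp: zero_prod_def)

lemma genOK_special2: "genOK {(0::real, 1::real, 0::real)}"
  by (rule genOK_zero) (auto simp: zero_prod_def)

lemma inL_parts:
  assumes "in_L g"
  shows "\<forall>p\<in>supp g. fst (snd p) \<in> \<int>" "\<forall>p\<in>supp g. snd (snd p) = 0"
    "loc_fin {g0. \<exists>g1 g2. (g0, g1, g2) \<in> supp g}"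
    "\<And>g0. loc_fin {g1. \<exists>g2. (g0, g1, g2) \<in> supp g}"
  using assms unfolding in_L_def in_L1_def in_L2_def by blast+

lemma Gmain_mem:
  assumes "y \<in> Gmain g \<alpha> m"
  obtains \<beta> l where "y = (\<beta> - \<alpha>, l - real_of_int m, 0)" "(\<beta>, l, 0) \<in> supp g" "(\<beta>, l) \<noteq> (\<alpha>, real_of_int m)"
  using assms unfolding Gmain_def by blast

lemma genOK_Gmain:
  assumes gL: "in_L g" and lead: "\<forall>p\<in>supp g. lexle (\<alpha>, real_of_int m, 0) p"
  shows "genOK (Gmain g \<alpha> m)"
proof -
  have key: "0 \<le> fst y \<and> fst (snd y) \<in> \<int> \<and> snd (snd y) \<in> \<int> \<and> 0 < y
      \<and> (fst y = 0 \<longrightarrow> 0 \<le> fst (snd y) \<and> 0 \<le> fst (snd y) + snd (snd y))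
      \<and> (0 < fst y \<longrightarrow> snd (snd y) = 0)" if y: "y \<in> Gmain g \<alpha> m" for y
  proof -
    obtain \<beta> l where bl: "y = (\<beta> - \<alpha>, l - real_of_int m, 0)" "(\<beta>, l, 0) \<in> supp g" "(\<beta>, l) \<noteq> (\<alpha>, real_of_int m)"
      using Gmain_mem[OF y] by blast
    have "(\<alpha>, real_of_int m, 0) \<le> (\<beta>, l, (0::real))" using lead bl(2) lexle_eq by blast
    then have o: "\<alpha> < \<beta> \<or> (\<alpha> = \<beta> \<and> real_of_int m < l)" using bl(3) by auto
    have "l \<in> \<int>" using inL_parts(1)[OF gL] bl(2) by fastforce
    then have li: "l - real_of_int m \<in> \<int>" by (simp add: Ints_diff)
    show ?thesis using o li bl(1) by (auto simp: zero_prod_def)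
  qed
  have lf: "loc_fin (fst ` Gmain g \<alpha> m)"
  proof (rule lf_subset[OF lf_shift[OF inL_parts(3)[OF gL], of "- \<alpha>"]])
    show "fst ` Gmain g \<alpha> m \<subseteq> (\<lambda>x. x + - \<alpha>) ` {g0. \<exists>g1 g2. (g0, g1, g2) \<in> supp g}"
    proof
      fix x assume "x \<in> fst ` Gmain g \<alpha> m"
      then obtain y where "y \<in> Gmain g \<alpha> m" "x = fst y" by blast
      then obtain \<beta> l where "x = \<beta> - \<alpha>" "(\<beta>, l, 0) \<in> supp g" using Gmain_mem by (metis fst_conv)
      then show "x \<in> (\<lambda>x. x + - \<alpha>) ` {g0. \<exists>g1 g2. (g0, g1, g2) \<in> supp g}" by force
    qed
  qed
  have bnd: "\<exists>L. \<forall>y\<in>Gmain g \<alpha> m. 0 < fst y \<and> fst y \<le> c \<longrightarrow> L \<le> fst (snd y)" for c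
  proof -
    define Bs where "Bs = {x \<in> {g0. \<exists>g1 g2. (g0, g1, g2) \<in> supp g}. x \<le> c + \<alpha>}"
    have fB: "finite Bs" using inL_parts(3)[OF gL] by (simp add: Bs_def loc_fin_def)
    have "loc_fin (\<Union>\<beta>\<in>Bs. {g1. \<exists>g2. (\<beta>, g1, g2) \<in> supp g})"
      by (rule lf_UN[OF fB]) (use inL_parts(4)[OF gL] in blast)
    then obtain L' where L': "\<forall>x\<in>(\<Union>\<beta>\<in>Bs. {g1. \<exists>g2. (\<beta>, g1, g2) \<in> supp g}). L' \<le> x" using lf_bdd by blast
    have "\<forall>y\<in>Gmain g \<alpha> m. 0 < fst y \<and> fst y \<le> c \<longrightarrow> L' - real_of_int m \<le> fst (snd y)"
    proof (intro ballI impI)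
      fix y assume y: "y \<in> Gmain g \<alpha> m" and "0 < fst y \<and> fst y \<le> c"
      obtain \<beta> l where bl: "y = (\<beta> - \<alpha>, l - real_of_int m, 0)" "(\<beta>, l, 0) \<in> supp g"
        using Gmain_mem[OF y] by blast
      then have "\<beta> \<in> Bs" using \<open>0 < fst y \<and> fst y \<le> c\<close> by (auto simp: Bs_def)
      then have "l \<in> (\<Union>\<beta>\<in>Bs. {g1. \<exists>g2. (\<beta>, g1, g2) \<in> supp g})" using bl(2) by blast
      then have "L' \<le> l" using L' by blast
      then show "L' - real_of_int m \<le> fst (snd y)" using bl(1) by simp
    qed
    then show ?thesis by blast
  qed
  show ?thesis unfolding genOK_def using key lf bnd by blast
qed

definition G3 :: "ts \<Rightarrow> real \<Rightarrow> int \<Rightarrow> mon set" where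
  "G3 g \<alpha> m = (if m \<noteq> 0 then gens3 g \<alpha> m else emb ` gens2 g \<alpha>)"

lemma genOK_G3:
  assumes gL: "in_L g" and lead: "\<forall>p\<in>supp g. lexle (\<alpha>, real_of_int m, 0) p"
  shows "genOK (G3 g \<alpha> m)"
proof (cases "m = 0")
  case True
  then have "G3 g \<alpha> m = Gmain g \<alpha> 0 \<union> {(0, 1, 0)}" by (simp add: G3_def gens2_eq)
  then show ?thesis using genOK_union[OF genOK_Gmain[OF gL lead] genOK_special2] True by simp
next
  case False
  then have "G3 g \<alpha> m = Gmain g \<alpha> m \<union> {(0, 1, -1), (0, 0, 1)}" by (simp add: G3_def gens3_eq)
  then show ?thesis using genOK_union[OF genOK_Gmain[OF gL lead] genOK_special1] by simp
qed

lemma d010_G3: "(0, 1, 0) \<in> sgrp add_mon (G3 g \<alpha> m)"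
proof (cases "m = 0")
  case True
  then have "(0, 1, 0) \<in> G3 g \<alpha> m" by (simp add: G3_def gens2_eq)
  then show ?thesis by (rule sgrp.gen)
next
  case False
  then have "(0, 1, -1) \<in> G3 g \<alpha> m" "(0, 0, 1) \<in> G3 g \<alpha> m" by (simp_all add: G3_def gens3_eq)
  then have "add_mon (0, 1, -1) (0, 0, 1) \<in> sgrp add_mon (G3 g \<alpha> m)" by (blast intro: sgrp.add sgrp.gen)
  then show ?thesis by (simp add: add_mon_def)
qed

lemma Gmain_sub_G3: "Gmain g \<alpha> m \<subseteq> G3 g \<alpha> m"
  by (cases "m = 0") (auto simp: G3_def gens2_eq gens3_eq)

lemma R_set_eq: "R_set g \<alpha> m = (\<lambda>x. x + (1, 0, 0)) ` sgrp add_mon (G3 g \<alpha> m)"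
proof (cases "m = 0")
  case True
  have "R_set g \<alpha> m = {(r0 + 1, r1, 0) | r0 r1. (r0, r1) \<in> sgrp add2 (gens2 g \<alpha>)}"
    using True by (simp add: R_set_def)
  also have "\<dots> = (\<lambda>x. x + (1, 0, 0)) ` emb ` sgrp add2 (gens2 g \<alpha>)"
  proof (rule set_eqI)
    fix x
    show "x \<in> {(r0 + 1, r1, 0) | r0 r1. (r0, r1) \<in> sgrp add2 (gens2 g \<alpha>)} \<longleftrightarrow>
          x \<in> (\<lambda>x. x + (1, 0, 0)) ` emb ` sgrp add2 (gens2 g \<alpha>)"
    proof
      assume "x \<in> {(r0 + 1, r1, 0) | r0 r1. (r0, r1) \<in> sgrp add2 (gens2 g \<alpha>)}"
      then obtain r0 r1 where "x = (r0 + 1, r1, 0)" "(r0, r1) \<in> sgrp add2 (gens2 g \<alpha>)" by blast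
      moreover have "(r0 + 1, r1, 0) = emb (r0, r1) + (1, 0, 0)" by (simp add: emb_def)
      ultimately show "x \<in> (\<lambda>x. x + (1, 0, 0)) ` emb ` sgrp add2 (gens2 g \<alpha>)" by blast
    next
      assume "x \<in> (\<lambda>x. x + (1, 0, 0)) ` emb ` sgrp add2 (gens2 g \<alpha>)"
      then obtain p where p: "p \<in> sgrp add2 (gens2 g \<alpha>)" "x = emb p + (1, 0, 0)" by blast
      obtain r0 r1 where "p = (r0, r1)" by (cases p)
      then show "x \<in> {(r0 + 1, r1, 0) | r0 r1. (r0, r1) \<in> sgrp add2 (gens2 g \<alpha>)}"
        using p by (auto simp: emb_def)
    qed
  qed
  also have "\<dots> = (\<lambda>x. x + (1, 0, 0)) ` sgrp add_mon (G3 g \<alpha> m)"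
    using True by (simp add: G3_def sgrp_emb)
  finally show ?thesis .
next
  case False
  then show ?thesis by (auto simp: R_set_def G3_def add_mon_eq)
qed

lemma thirds_G3_m0:
  assumes "m = 0" shows "x \<in> sgrp add_mon (G3 g \<alpha> m) \<Longrightarrow> snd (snd x) = 0"
proof (induction rule: sgrp.induct)
  case (gen x)
  then have "x \<in> emb ` gens2 g \<alpha>" using assms by (simp add: G3_def)
  then show ?case by (auto simp: emb_def)
next
  case (add x y) then show ?case by (simp add: add_mon_def)
qed

lemma supp_h:
  assumes gL: "in_L g" and lead: "\<forall>p\<in>supp g. lexle (\<alpha>, real_of_int m, 0) p"
  shows "supp (\<lambda>s. g (s + (\<alpha>, real_of_int m, 0)) / a) \<subseteq> insert 0 (sgrp add_mon (G3 g \<alpha> m))"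
proof
  fix s assume "s \<in> supp (\<lambda>s. g (s + (\<alpha>, real_of_int m, 0)) / a)"
  then have sg: "s + (\<alpha>, real_of_int m, 0) \<in> supp g" by (simp add: supp_def)
  obtain s0 s1 s2 where s: "s = (s0, s1, s2)" using prod_cases3 by blast
  have "s2 = 0" using inL_parts(2)[OF gL] sg s by fastforce
  show "s \<in> insert 0 (sgrp add_mon (G3 g \<alpha> m))"
  proof (cases "s = 0")
    case True then show ?thesis by simp
  next
    case False
    then have "(s0 + \<alpha>, s1 + real_of_int m) \<noteq> (\<alpha>, real_of_int m)" using s \<open>s2 = 0\<close> by (auto simp: zero_prod_def)
    moreover have "(s0 + \<alpha>, s1 + real_of_int m, 0) \<in> supp g" using sg s \<open>s2 = 0\<close> by simp
    ultimately have "(s0 + \<alpha> - \<alpha>, s1 + real_of_int m - real_of_int m, 0) \<in> Gmain g \<alpha> m"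
      unfolding Gmain_def by blast
    then have "s \<in> G3 g \<alpha> m" using Gmain_sub_G3 s \<open>s2 = 0\<close> by auto
    then show ?thesis by (blast intro: sgrp.gen)
  qed
qed




lemma wo_translate: assumes "wo A" shows "wo ((\<lambda>x. x + t) ` A)"
  unfolding wo_def
proof (intro allI impI)
  fix B assume B: "B \<subseteq> (\<lambda>x. x + t) ` A" "B \<noteq> {}"
  have "(\<lambda>x. x - t) ` B \<subseteq> A"
  proof
    fix y assume "y \<in> (\<lambda>x. x - t) ` B"
    then obtain b where "b \<in> B" "y = b - t" by blast
    then obtain a where "a \<in> A" "b = a + t" using B(1) by blast
    then show "y \<in> A" using \<open>y = b - t\<close> by simp
  qed
  moreover have "(\<lambda>x. x - t) ` B \<noteq> {}" using B(2) by blast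
  ultimately obtain c where c: "c \<in> (\<lambda>x. x - t) ` B" "\<forall>d\<in>(\<lambda>x. x - t) ` B. c \<le> d"
    using assms unfolding wo_def by blast
  then obtain b where b: "b \<in> B" "c = b - t" by blast
  show "\<exists>b\<in>B. \<forall>c\<in>B. b \<le> c"
  proof (intro bexI[OF _ b(1)] ballI)
    fix d assume "d \<in> B"
    then have "c \<le> d - t" using c(2) by blast
    then have "c + t \<le> d - t + t" by (rule mon_add_le)
    then show "b \<le> d" using b(2) by simp
  qed
qed

lemma LF_in_L2: "LF (supp f) \<Longrightarrow> (\<forall>p\<in>supp f. fst p > 0) \<Longrightarrow> in_L2 f"
  unfolding LF_def in_L2_def by blast

theorem lemma5p3:
  fixes g :: ts and a \<alpha> :: real and m :: int
  assumes "in_L g"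
    and "g (\<alpha>, real_of_int m, 0) = a"
    and "\<forall>p \<in> supp g. lexle (\<alpha>, real_of_int m, 0) p"
    and "a > 0" and "\<alpha> > 0"
  shows "(\<exists>\<phi>. parabolic \<phi> \<and> comp_gam a \<alpha> m \<phi> = g) \<and>
         (\<forall>\<phi>. parabolic \<phi> \<and> comp_gam a \<alpha> m \<phi> = g \<longrightarrow>
              in_L2 \<phi> \<and> (m = 0 \<longrightarrow> in_L \<phi>) \<and>
              supp (ts_minus \<phi> (ts_mono 1 (1, 0, 0))) \<subseteq> R_set g \<alpha> m)"
proof -
  note gL = assms(1) and lead = assms(3)
  define v :: mon where "v = (\<alpha>, real_of_int m, 0)"
  define w :: mon where "w = (1, 0, 0)"
  define M where "M = sgrp add_mon (G3 g \<alpha> m)"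
  define h where "h = (\<lambda>s. g (s + v) / a)"
  have gG: "genOK (G3 g \<alpha> m)" using genOK_G3[OF gL lead] .
  have gM: "goodM M" unfolding M_def using goodM_M[OF gG d010_G3] .
  have cM: "closedM M" using gM by (simp add: goodM_def)
  have hM: "supp h \<subseteq> insert 0 M" unfolding h_def M_def v_def using supp_h[OF gL lead] .
  have h0: "h 0 = 1" using assms(2,4) by (simp add: h_def v_def)
  have a0: "\<alpha> \<noteq> 0" using assms(5) by simp
  have LFS: "LF ((\<lambda>x. x + w) ` insert 0 M)" unfolding w_def M_def using LF_shift[OF LF_M0[OF gG]] .
  have Mpos: "\<And>x. x \<in> M \<Longrightarrow> 0 < x" using cM by (simp add: closedM_def)
  have M0nn: "\<And>x. x \<in> insert 0 M \<Longrightarrow> 0 \<le> x" using Mpos less_imp_le by blast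
  have w_le: "\<And>x. x \<in> insert 0 M \<Longrightarrow> w \<le> x + w"
    using M0nn mon_le_add by (metis add.commute)
  have comp: "comp_gam a \<alpha> m \<phi> s = a * Cf \<alpha> m (ts_eps \<phi>) (s - v)" for \<phi> s
    by (simp add: comp_gam_Cf ts_scale_def mult_mono_left v_def)
  have one_w: "ts_one (p - w) = (if p = w then 1 else 0)" for p
    by (simp add: ts_one_apply)
  obtain E where E: "supp E \<subseteq> M" "\<And>s. Cf \<alpha> m E s = h s"
    using solution_exists[OF gM hM h0 a0] by blast
  define \<phi>0 where "\<phi>0 = (\<lambda>p. ts_one (p - w) + E (p - w))"
  have "0 \<notin> M" using Mpos[of 0] by blast
  then have "0 \<notin> supp E" using E(1) by blast
  then have E0: "E 0 = 0" by (simp add: supp_def)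
  have eps0: "ts_eps \<phi>0 = E"
    by (rule ext) (simp add: ts_eps_def \<phi>0_def add_mon_eq w_def[symmetric])
  have supp\<phi>0: "supp \<phi>0 \<subseteq> (\<lambda>x. x + w) ` insert 0 M"
  proof
    fix p assume "p \<in> supp \<phi>0"
    then have "ts_one (p - w) + E (p - w) \<noteq> 0" by (simp add: supp_def \<phi>0_def)
    then have "p - w \<in> insert 0 M" using E(1) by (cases "p - w = 0") (auto simp: ts_one_apply supp_def)
    moreover have "p = (p - w) + w" by simp
    ultimately show "p \<in> (\<lambda>x. x + w) ` insert 0 M" by blast
  qed
  have par0: "parabolic \<phi>0"
    unfolding parabolic_def
  proof (intro conjI ballI)
    show "hahn \<phi>0" unfolding hahn_def wo_eq using wo_subset[OF LF_wo[OF LFS] supp\<phi>0] .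
    show "\<phi>0 (1, 0, 0) = 1" using E0 by (simp add: \<phi>0_def w_def[symmetric] ts_one_apply)
    fix p assume "p \<in> supp \<phi>0"
    then obtain x where "x \<in> insert 0 M" "p = x + w" using supp\<phi>0 by blast
    then show "lexle (1, 0, 0) p" using w_le by (simp add: lexle_eq w_def[symmetric])
  qed
  have comp0: "comp_gam a \<alpha> m \<phi>0 = g"
  proof
    fix s show "comp_gam a \<alpha> m \<phi>0 s = g s"
      using comp[of \<phi>0 s] eps0 E(2) assms(4) by (simp add: h_def)
  qed
  have all: "in_L2 \<phi> \<and> (m = 0 \<longrightarrow> in_L \<phi>) \<and> supp (ts_minus \<phi> (ts_mono 1 (1, 0, 0))) \<subseteq> R_set g \<alpha> m"
    if par: "parabolic \<phi>" and cg: "comp_gam a \<alpha> m \<phi> = g" for \<phi>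
  proof -
    define e where "e = ts_eps \<phi>"
    have hw: "\<phi> w = 1" using par by (simp add: parabolic_def w_def)
    have hs: "\<And>p. p \<in> supp \<phi> \<Longrightarrow> w \<le> p" using par by (simp add: parabolic_def w_def lexle_eq)
    have woP: "wo (supp \<phi>)" using par by (simp add: parabolic_def hahn_def wo_eq)
    have e_apply: "e p = \<phi> (p + w) - ts_one p" for p
      by (simp add: e_def ts_eps_def add_mon_eq w_def)
    have pe: "pos e" unfolding pos_def
    proof
      fix p assume "p \<in> supp e"
      then have ne: "\<phi> (p + w) - ts_one p \<noteq> 0" by (simp add: supp_def e_apply)
      have "p \<noteq> 0" using ne hw by (auto simp: ts_one_apply)
      then have "\<phi> (p + w) \<noteq> 0" using ne by (simp add: ts_one_apply)
      then have "w \<le> p + w" using hs by (simp add: supp_def)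
      then have "0 \<le> p" using mon_add_le[of "w" "p + w" "-w"] by simp
      then show "0 < p" using \<open>p \<noteq> 0\<close> by simp
    qed
    have suppe: "supp e \<subseteq> (\<lambda>x. x + (- w)) ` supp \<phi>"
    proof
      fix p assume "p \<in> supp e"
      then have "0 < p" using pe by (simp add: pos_def)
      then have "p \<noteq> 0" by simp
      then have "\<phi> (p + w) \<noteq> 0" using \<open>p \<in> supp e\<close> by (simp add: supp_def e_apply ts_one_apply)
      then have "p + w \<in> supp \<phi>" by (simp add: supp_def)
      moreover have "p = (p + w) + (- w)" by simp
      ultimately show "p \<in> (\<lambda>x. x + (- w)) ` supp \<phi>" by blast
    qed
    have woe: "wo (supp e)" using wo_subset[OF wo_translate[OF woP] suppe] .
    have eqh: "Cf \<alpha> m e s = h s" for s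
    proof -
      have "comp_gam a \<alpha> m \<phi> (s + v) = g (s + v)" using cg by simp
      then have "a * Cf \<alpha> m e s = g (s + v)" using comp[of \<phi> "s + v"] by (simp add: e_def)
      then show ?thesis using assms(4) by (simp add: h_def field_simps)
    qed
    have seM: "supp e \<subseteq> M" using solution_supp[OF gM hM pe woe eqh a0] .
    have sphi: "supp \<phi> \<subseteq> (\<lambda>x. x + w) ` insert 0 M"
    proof
      fix p assume p: "p \<in> supp \<phi>"
      have "p - w \<in> insert 0 M"
      proof (cases "p = w")
        case True then show ?thesis by simp
      next
        case False
        then have "e (p - w) = \<phi> p" by (simp add: e_apply ts_one_apply)
        then have "p - w \<in> supp e" using p by (simp add: supp_def)
        then show ?thesis using seM by blast
      qed
      moreover have "p = (p - w) + w" by simp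
      ultimately show "p \<in> (\<lambda>x. x + w) ` insert 0 M" by blast
    qed
    have L2: "in_L2 \<phi>"
    proof (rule LF_in_L2)
      show "LF (supp \<phi>)" using LF_mono[OF LFS sphi] .
      show "\<forall>p\<in>supp \<phi>. fst p > 0"
      proof
        fix p assume "p \<in> supp \<phi>"
        then obtain x where x: "x \<in> insert 0 M" "p = x + w" using sphi by blast
        have "0 \<le> fst x" using M0_basic[OF gG] x(1) unfolding M_def by blast
        then show "fst p > 0" using x(2) by (simp add: w_def)
      qed
    qed
    have Lm: "m = 0 \<longrightarrow> in_L \<phi>"
    proof
      assume m0: "m = 0"
      have "\<forall>p\<in>supp \<phi>. snd (snd p) = 0 \<and> fst (snd p) \<in> \<int>"
      proof
        fix p assume "p \<in> supp \<phi>"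
        then obtain x where x: "x \<in> insert 0 M" "p = x + w" using sphi by blast
        have "fst (snd x) \<in> \<int>" using M0_basic[OF gG] x(1) unfolding M_def by blast
        moreover have "snd (snd x) = 0"
        proof (cases "x = 0")
          case True then show ?thesis by simp
        next
          case False then show ?thesis using thirds_G3_m0[OF m0] x(1) unfolding M_def by blast
        qed
        ultimately show "snd (snd p) = 0 \<and> fst (snd p) \<in> \<int>" using x(2) by (simp add: w_def)
      qed
      then show "in_L \<phi>" using L2 by (simp add: in_L_def in_L1_def)
    qed
    have RS: "supp (ts_minus \<phi> (ts_mono 1 (1, 0, 0))) \<subseteq> R_set g \<alpha> m"
    proof
      fix p assume p: "p \<in> supp (ts_minus \<phi> (ts_mono 1 (1, 0, 0)))"
      then have ne: "\<phi> p - (if p = w then 1 else 0) \<noteq> 0"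
        by (simp add: supp_def ts_minus_def ts_mono_def w_def)
      then have "p \<noteq> w" using hw by auto
      then have "e (p - w) = \<phi> p" by (simp add: e_apply ts_one_apply)
      then have "p - w \<in> supp e" using ne \<open>p \<noteq> w\<close> by (simp add: supp_def)
      then have "p - w \<in> M" using seM by blast
      moreover have "p = (p - w) + w" by simp
      ultimately show "p \<in> R_set g \<alpha> m" unfolding R_set_eq M_def[symmetric] w_def[symmetric] by blast
    qed
    show ?thesis using L2 Lm RS by blast
  qed
  show ?thesis using par0 comp0 all by blast
qed


end
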